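(* Every global protocol that is implementable under $\mathtt{bag}$ is implementable under $\mathtt{p2p}$, and every global protocol that is implementable under $\mathtt{p2p}$ is implementable under $\mathtt{sb}$.
   Context: Alphabets. $\mathcal{P}$ participants, $\mathcal{V}$ message values. $\Gamma=\{p\to q:m\mid p,q\in\mathcal{P},m\in\mathcal{V}\}$. $\Sigma=\Sigma_!\cup\Sigma_?$ with $\mathsf{snd}(p,q,m)$ ($p$ sends $m$ to $q$) and $\mathsf{rcv}(p,q,m)$ ($q$ receives $m$ from $p$); $\Sigma_p$ = sends by $p$ and receives by $p$. $w\Downarrow_\Delta$ deletes letters outside $\Delta$; $\le$ prefix order, $\mathrm{pref}$ finite prefixes. $\mathrm{split}:\Gamma^\infty\to\Sigma^\infty$, $p\to q:m\mapsto\mathsf{snd}(p,q,m)\mathsf{rcv}(p,q,m)$. $w\equiv w'$ iff equal projections onto every $\Sigma_p$; $[W]_\equiv$ closure under $\equiv$. Network architectures. Channels $C$, $\xi:\mathcal{P}\times\mathcal{P}\to C$, buffers with contents $B$, empty $b_0$, partial $\mathit{insert}(\mu),\mathit{remove}(\mu)$ for $\mu\in\mathcal{P}\times\mathcal{P}\times\mathcal{V}$. Channel states map channels to contents, initially all $b_0$ ($\chi_0$); $\mathsf{snd}(p,q,m)$ inserts $(p,q,m)$ into channel $\xi(p,q)$, $\mathsf{rcv}(p,q,m)$ removes it from $\xi(p,q)$. A word is channel-compliant if all operations are defined (infinite words: all finite prefixes); $\mathcal{L}(\mathbb{A})$ is the set of such words. FIFO buffers: sequences, insert appends, $\mathit{remove}(\mu)$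 defined iff $\mu$ is at the head and then removes it. Bag buffers: finite multisets, insert adds a copy, $\mathit{remove}(\mu)$ defined iff $\mu$ present, removes a copy. $\mathtt{p2p}$: FIFO, $\xi(p,q)=(p,q)$. $\mathtt{sb}$: FIFO, $C=\mathcal{P}$, $\xi(p,q)=p$. $\mathtt{bag}$: bag buffers, single channel. CLTS over $\mathbb{A}$: family of deterministic LTSs $T_p$ over $\Sigma_p$; a send moves the sender and inserts into the channel, a receive moves the receiver and removes from the channel (must be defined). Final configuration: all local states final and channels empty ($\chi_0$). Language: traces of finite runs ending in final configurations plus traces of infinite runs. Deadlock-free: every reachable non-final configuration has an outgoing transition. Global protocol: LTS $\mathcal{S}=(S,\Gamma,T,s_0,F)$ that is sink-final (final states have no outgoing transitions), has sender-driven choice (all outgoing transitions of a state share their sender and have pairwise distinct labels), and is deadlock-free (every reachable state is final or has an outgoing transition); $\mathcal{L}(\mathcal{S})$ is its set of maximal traces (finite ending in $F$, or infinite). Semantics: $\mathcal{L}_{\mathbb{A}}(\mathcal{S})=([\Sigma^*\cap\mathrm{split}(\mathcal{L}(\mathcal{S}))]_\equiv\cap\mathcal{L}(\mathbb{A}))\cup\{w\in\Sigma^\omega\mid\forall\text{ finite }u\le w.\ u\in\mathrm{pref}([\mathrm{split}(\mathcal{L}(\mathcal{S}))]_\equiv\cap\mathcal{L}(\mathbb{A}))\}$. $\mathcal{S}$ is implementable under $\mathbb{A}$ if there is a deadlock-free CLTS over $\mathbb{A}$ whose language equals $\mathcal{L}_{\mathbb{A}}(\mathcal{S})$. *)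

theory Defs
  imports Main "HOL-Library.Infinite_Set" "HOL-Library.Multiset"
begin

datatype ('p, 'v) msg = Msg 'p 'p 'v

datatype ('p, 'v) act = Snd 'p 'p 'v | Rcv 'p 'p 'v

fun sender :: "('p, 'v) msg \<Rightarrow> 'p" where
  "sender (Msg p q m) = p"

fun actor :: "('p, 'v) act \<Rightarrow> 'p" where
  "actor (Snd p q m) = p"
| "actor (Rcv p q m) = q"

fun act_msg :: "('p, 'v) act \<Rightarrow> 'p \<times> 'p \<times> 'v" where
  "act_msg (Snd p q m) = (p, q, m)"
| "act_msg (Rcv p q m) = (p, q, m)"

definition Sigma_p :: "'p \<Rightarrow> ('p, 'v) act set" where
  "Sigma_p p = {a. actor a = p}"

datatype 'a word = Fin "'a list" | Inf "nat \<Rightarrow> 'a"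

definition is_fin :: "'a word \<Rightarrow> bool" where
  "is_fin w = (\<exists>u. w = Fin u)"

definition is_inf :: "'a word \<Rightarrow> bool" where
  "is_inf w = (\<exists>f. w = Inf f)"

fun fprefix :: "'a list \<Rightarrow> 'a word \<Rightarrow> bool" where
  "fprefix u (Fin v) = (\<exists>v'. v = u @ v')"
| "fprefix u (Inf f) = (u = map f [0..<length u])"

definition pref :: "'a word set \<Rightarrow> 'a list set" where
  "pref W = {u. \<exists>w\<in>W. fprefix u w}"

(* w \<Down>_\<Delta>: delete all letters outside \<Delta> *)
fun wproj :: "'a set \<Rightarrow> 'a word \<Rightarrow> 'a word" where
  "wproj D (Fin u) = Fin (filter (\<lambda>a. a \<in> D) u)"
| "wproj D (Inf f) =
     (if infinite {i. f i \<in> D}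
      then Inf (\<lambda>n. f (Infinite_Set.enumerate {i. f i \<in> D} n))
      else Fin (filter (\<lambda>a. a \<in> D)
                 (map f [0..<(LEAST N. \<forall>i\<ge>N. f i \<notin> D)])))"

fun split_msg :: "('p, 'v) msg \<Rightarrow> ('p, 'v) act list" where
  "split_msg (Msg p q m) = [Snd p q m, Rcv p q m]"

fun split_word :: "('p, 'v) msg word \<Rightarrow> ('p, 'v) act word" where
  "split_word (Fin u) = Fin (concat (map split_msg u))"
| "split_word (Inf g) = Inf (\<lambda>n. split_msg (g (n div 2)) ! (n mod 2))"

definition interswap_eq :: "('p, 'v) act word \<Rightarrow> ('p, 'v) act word \<Rightarrow> bool" where
  "interswap_eq w w' = (\<forall>p. wproj (Sigma_p p) w = wproj (Sigma_p p) w')"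

definition eq_closure :: "('p, 'v) act word set \<Rightarrow> ('p, 'v) act word set" where
  "eq_closure W = {w. \<exists>w'\<in>W. interswap_eq w w'}"

record ('p, 'v, 'c, 'b) arch =
  chan :: "'p \<Rightarrow> 'p \<Rightarrow> 'c"
  empty_buf :: 'b
  insert_buf :: "'p \<times> 'p \<times> 'v \<Rightarrow> 'b \<Rightarrow> 'b option"
  remove_buf :: "'p \<times> 'p \<times> 'v \<Rightarrow> 'b \<Rightarrow> 'b option"

fun ch_step :: "('p, 'v, 'c, 'b) arch \<Rightarrow> ('c \<Rightarrow> 'b) \<Rightarrow> ('p, 'v) act \<Rightarrow> ('c \<Rightarrow> 'b) option" where
  "ch_step A \<chi> (Snd p q m) =
     (case insert_buf A (p, q, m) (\<chi> (chan A p q)) of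
        None \<Rightarrow> None | Some b \<Rightarrow> Some (\<chi>(chan A p q := b)))"
| "ch_step A \<chi> (Rcv p q m) =
     (case remove_buf A (p, q, m) (\<chi> (chan A p q)) of
        None \<Rightarrow> None | Some b \<Rightarrow> Some (\<chi>(chan A p q := b)))"

definition chi0 :: "('p, 'v, 'c, 'b) arch \<Rightarrow> ('c \<Rightarrow> 'b)" where
  "chi0 A = (\<lambda>c. empty_buf A)"

fun ch_run :: "('p, 'v, 'c, 'b) arch \<Rightarrow> ('c \<Rightarrow> 'b) \<Rightarrow> ('p, 'v) act list \<Rightarrow> ('c \<Rightarrow> 'b) option" where
  "ch_run A \<chi> [] = Some \<chi>"
| "ch_run A \<chi> (a # w) = (case ch_step A \<chi> a of None \<Rightarrow> None | Some \<chi>' \<Rightarrow> ch_run A \<chi>' w)"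

definition compliant :: "('p, 'v, 'c, 'b) arch \<Rightarrow> ('p, 'v) act list \<Rightarrow> bool" where
  "compliant A w = (ch_run A (chi0 A) w \<noteq> None)"

definition arch_lang :: "('p, 'v, 'c, 'b) arch \<Rightarrow> ('p, 'v) act word set" where
  "arch_lang A = {Fin w |w. compliant A w} \<union> {Inf f |f. \<forall>n. compliant A (map f [0..<n])}"

definition fifo_insert :: "'m \<Rightarrow> 'm list \<Rightarrow> 'm list option" where
  "fifo_insert \<mu> b = Some (b @ [\<mu>])"

fun fifo_remove :: "'m \<Rightarrow> 'm list \<Rightarrow> 'm list option" where
  "fifo_remove \<mu> [] = None"
| "fifo_remove \<mu> (\<nu> # b) = (if \<nu> = \<mu> then Some b else None)"

definition bag_insert :: "'m \<Rightarrow> 'm multiset \<Rightarrow> 'm multiset option" where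
  "bag_insert \<mu> b = Some (add_mset \<mu> b)"

definition bag_remove :: "'m \<Rightarrow> 'm multiset \<Rightarrow> 'm multiset option" where
  "bag_remove \<mu> b = (if \<mu> \<in># b then Some (b - {#\<mu>#}) else None)"

definition p2p :: "('p, 'v, 'p \<times> 'p, ('p \<times> 'p \<times> 'v) list) arch" where
  "p2p = \<lparr>chan = (\<lambda>p q. (p, q)), empty_buf = [],
          insert_buf = fifo_insert, remove_buf = fifo_remove\<rparr>"

definition sb :: "('p, 'v, 'p, ('p \<times> 'p \<times> 'v) list) arch" where
  "sb = \<lparr>chan = (\<lambda>p q. p), empty_buf = [],
         insert_buf = fifo_insert, remove_buf = fifo_remove\<rparr>"

definition bag :: "('p, 'v, unit, ('p \<times> 'p \<times> 'v) multiset) arch" where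
  "bag = \<lparr>chan = (\<lambda>p q. ()), empty_buf = {#},
          insert_buf = bag_insert, remove_buf = bag_remove\<rparr>"

record ('q, 'a) dlts =
  dinit :: 'q
  ddelta :: "'q \<Rightarrow> 'a \<Rightarrow> 'q option"
  dfinal :: "'q set"

type_synonym ('q, 'p, 'v) clts = "'p \<Rightarrow> ('q, ('p, 'v) act) dlts"

definition clts_wf :: "('q, 'p, 'v) clts \<Rightarrow> bool" where
  "clts_wf T = (\<forall>p q a. a \<notin> Sigma_p p \<longrightarrow> ddelta (T p) q a = None)"

type_synonym ('q, 'p, 'c, 'b) config = "('p \<Rightarrow> 'q) \<times> ('c \<Rightarrow> 'b)"

definition cinit :: "('p, 'v, 'c, 'b) arch \<Rightarrow> ('q, 'p, 'v) clts \<Rightarrow> ('q, 'p, 'c, 'b) config" where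
  "cinit A T = ((\<lambda>p. dinit (T p)), chi0 A)"

definition cstep :: "('p, 'v, 'c, 'b) arch \<Rightarrow> ('q, 'p, 'v) clts \<Rightarrow>
    ('q, 'p, 'c, 'b) config \<Rightarrow> ('p, 'v) act \<Rightarrow> ('q, 'p, 'c, 'b) config \<Rightarrow> bool" where
  "cstep A T c a c' =
     (\<exists>q' \<chi>'. ddelta (T (actor a)) (fst c (actor a)) a = Some q'
            \<and> ch_step A (snd c) a = Some \<chi>'
            \<and> c' = ((fst c)(actor a := q'), \<chi>'))"

inductive creach :: "('p, 'v, 'c, 'b) arch \<Rightarrow> ('q, 'p, 'v) clts \<Rightarrow>
    ('q, 'p, 'c, 'b) config \<Rightarrow> ('p, 'v) act list \<Rightarrow> ('q, 'p, 'c, 'b) config \<Rightarrow> bool"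
  for A T where
  creach_nil: "creach A T c [] c"
| creach_step: "cstep A T c a c' \<Longrightarrow> creach A T c' w c'' \<Longrightarrow> creach A T c (a # w) c''"

definition cfinal :: "('p, 'v, 'c, 'b) arch \<Rightarrow> ('q, 'p, 'v) clts \<Rightarrow> ('q, 'p, 'c, 'b) config \<Rightarrow> bool" where
  "cfinal A T c = ((\<forall>p. fst c p \<in> dfinal (T p)) \<and> snd c = chi0 A)"

definition clts_lang :: "('p, 'v, 'c, 'b) arch \<Rightarrow> ('q, 'p, 'v) clts \<Rightarrow> ('p, 'v) act word set" where
  "clts_lang A T =
     {Fin w |w. \<exists>c. creach A T (cinit A T) w c \<and> cfinal A T c}
   \<union> {Inf f |f. \<exists>\<rho>. \<rho> 0 = cinit A T \<and> (\<forall>n. cstep A T (\<rho> n) (f n) (\<rho> (Suc n)))}"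

definition clts_deadlock_free :: "('p, 'v, 'c, 'b) arch \<Rightarrow> ('q, 'p, 'v) clts \<Rightarrow> bool" where
  "clts_deadlock_free A T =
     (\<forall>w c. creach A T (cinit A T) w c \<and> \<not> cfinal A T c \<longrightarrow> (\<exists>a c'. cstep A T c a c'))"

record ('s, 'p, 'v) gproto =
  gtrans :: "('s \<times> ('p, 'v) msg \<times> 's) set"
  ginit :: 's
  gfinal :: "'s set"

inductive greach :: "('s, 'p, 'v) gproto \<Rightarrow> 's \<Rightarrow> ('p, 'v) msg list \<Rightarrow> 's \<Rightarrow> bool"
  for S where
  greach_nil: "greach S s [] s"
| greach_step: "(s, l, s') \<in> gtrans S \<Longrightarrow> greach S s' w s'' \<Longrightarrow> greach S s (l # w) s''"

definition sink_final :: "('s, 'p, 'v) gproto \<Rightarrow> bool" where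
  "sink_final S = (\<forall>s\<in>gfinal S. \<forall>l s'. (s, l, s') \<notin> gtrans S)"

definition sender_driven :: "('s, 'p, 'v) gproto \<Rightarrow> bool" where
  "sender_driven S =
     (\<forall>s l1 s1 l2 s2. (s, l1, s1) \<in> gtrans S \<and> (s, l2, s2) \<in> gtrans S \<longrightarrow>
        sender l1 = sender l2 \<and> (l1 = l2 \<longrightarrow> s1 = s2))"

definition g_deadlock_free :: "('s, 'p, 'v) gproto \<Rightarrow> bool" where
  "g_deadlock_free S =
     (\<forall>w s. greach S (ginit S) w s \<longrightarrow> s \<in> gfinal S \<or> (\<exists>l s'. (s, l, s') \<in> gtrans S))"

definition global_protocol :: "('s, 'p, 'v) gproto \<Rightarrow> bool" where
  "global_protocol S = (sink_final S \<and> sender_driven S \<and> g_deadlock_free S)"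

definition glang :: "('s, 'p, 'v) gproto \<Rightarrow> ('p, 'v) msg word set" where
  "glang S =
     {Fin w |w. \<exists>s\<in>gfinal S. greach S (ginit S) w s}
   \<union> {Inf g |g. \<exists>\<sigma>. \<sigma> 0 = ginit S \<and> (\<forall>n. (\<sigma> n, g n, \<sigma> (Suc n)) \<in> gtrans S)}"

definition sem :: "('p, 'v, 'c, 'b) arch \<Rightarrow> ('s, 'p, 'v) gproto \<Rightarrow> ('p, 'v) act word set" where
  "sem A S =
     (eq_closure {w \<in> split_word ` glang S. is_fin w} \<inter> arch_lang A)
   \<union> {w. is_inf w \<and>
          (\<forall>u. fprefix u w \<longrightarrow> u \<in> pref (eq_closure (split_word ` glang S) \<inter> arch_lang A))}"

(* implementability; local states of the CLTS are taken to be finite words over \<Sigma>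
   (w.l.o.g.: every deterministic LTS can be unfolded into one with such states) *)
definition implementable :: "('p, 'v, 'c, 'b) arch \<Rightarrow> ('s, 'p, 'v) gproto \<Rightarrow> bool" where
  "implementable A S =
     (\<exists>T :: (('p, 'v) act list, 'p, 'v) clts.
        clts_wf T \<and> clts_deadlock_free A T \<and> clts_lang A T = sem A S)"

end

theory Submission
  imports Defs "HOL-Library.Sublist"
begin

abbreviation pj :: "'p \<Rightarrow> ('p,'v) act list \<Rightarrow> ('p,'v) act list" where
  "pj r u \<equiv> filter (\<lambda>a. a \<in> Sigma_p r) u"

lemma in_Sigma_p: "a \<in> Sigma_p r \<longleftrightarrow> actor a = r"
  by (simp add: Sigma_p_def)

lemma Sigma_p_cons[simp]: "Snd p q m \<in> Sigma_p r \<longleftrightarrow> p = r" "Rcv p q m \<in> Sigma_p r \<longleftrightarrow> q = r"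
  by (auto simp: Sigma_p_def)

fun is_snd :: "('p,'v) act \<Rightarrow> bool" where
  "is_snd (Snd p q m) = True" | "is_snd (Rcv p q m) = False"

definition msnd :: "('p,'v) act list \<Rightarrow> ('p \<times> 'p \<times> 'v) list" where
  "msnd w = map act_msg (filter is_snd w)"
definition mrcv :: "('p,'v) act list \<Rightarrow> ('p \<times> 'p \<times> 'v) list" where
  "mrcv w = map act_msg (filter (\<lambda>a. \<not> is_snd a) w)"

definition Sp :: "'p \<Rightarrow> ('p,'v) act list \<Rightarrow> ('p \<times> 'p \<times> 'v) list" where
  "Sp p w = filter (\<lambda>\<mu>. fst \<mu> = p) (msnd w)"
definition Rp :: "'p \<Rightarrow> ('p,'v) act list \<Rightarrow> ('p \<times> 'p \<times> 'v) list" where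
  "Rp p w = filter (\<lambda>\<mu>. fst \<mu> = p) (mrcv w)"
definition Spq :: "'p \<Rightarrow> 'p \<Rightarrow> ('p,'v) act list \<Rightarrow> ('p \<times> 'p \<times> 'v) list" where
  "Spq p q w = filter (\<lambda>\<mu>. fst \<mu> = p \<and> fst (snd \<mu>) = q) (msnd w)"
definition Rpq :: "'p \<Rightarrow> 'p \<Rightarrow> ('p,'v) act list \<Rightarrow> ('p \<times> 'p \<times> 'v) list" where
  "Rpq p q w = filter (\<lambda>\<mu>. fst \<mu> = p \<and> fst (snd \<mu>) = q) (mrcv w)"

lemma msnd_simps[simp]: "msnd [] = []" "msnd (xs @ ys) = msnd xs @ msnd ys"
  "msnd (Snd p q m # w) = (p,q,m) # msnd w" "msnd (Rcv p q m # w) = msnd w"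
  by (auto simp: msnd_def)
lemma mrcv_simps[simp]: "mrcv [] = []" "mrcv (xs @ ys) = mrcv xs @ mrcv ys"
  "mrcv (Snd p q m # w) = mrcv w" "mrcv (Rcv p q m # w) = (p,q,m) # mrcv w"
  by (auto simp: mrcv_def)

lemma SR_simps[simp]:
  "Sp p [] = []" "Sp p (xs @ ys) = Sp p xs @ Sp p ys"
  "Rp p [] = []" "Rp p (xs @ ys) = Rp p xs @ Rp p ys"
  "Spq p q [] = []" "Spq p q (xs @ ys) = Spq p q xs @ Spq p q ys"
  "Rpq p q [] = []" "Rpq p q (xs @ ys) = Rpq p q xs @ Rpq p q ys"
  by (auto simp: Sp_def Rp_def Spq_def Rpq_def)

lemma SR_single[simp]:
  "Sp p [Snd a b c] = (if a = p then [(a,b,c)] else [])" "Sp p [Rcv a b c] = []"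
  "Rp p [Rcv a b c] = (if a = p then [(a,b,c)] else [])" "Rp p [Snd a b c] = []"
  "Spq p q [Snd a b c] = (if a = p \<and> b = q then [(a,b,c)] else [])" "Spq p q [Rcv a b c] = []"
  "Rpq p q [Rcv a b c] = (if a = p \<and> b = q then [(a,b,c)] else [])" "Rpq p q [Snd a b c] = []"
  by (auto simp: Sp_def Rp_def Spq_def Rpq_def)

lemma Sp_pj: "Sp p (pj p w) = Sp p w"
proof (induction w)
  case (Cons a w) then show ?case
    using SR_simps(2)[of p "[a]" w] SR_simps(2)[of p "[a]" "pj p w"]
    by (cases a) (auto simp: in_Sigma_p simp del: SR_simps)
qed simp

lemma Spq_pj: "Spq p q (pj p w) = Spq p q w"
proof (induction w)
  case (Cons a w) then show ?case
    using SR_simps(6)[of p q "[a]" w] SR_simps(6)[of p q "[a]" "pj p w"]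
    by (cases a) (auto simp: in_Sigma_p simp del: SR_simps)
qed simp

lemma Rpq_pj: "Rpq p q (pj q w) = Rpq p q w"
proof (induction w)
  case (Cons a w) then show ?case
    using SR_simps(8)[of p q "[a]" w] SR_simps(8)[of p q "[a]" "pj q w"]
    by (cases a) (auto simp: in_Sigma_p simp del: SR_simps)
qed simp

lemma Rpq_Rp: "Rpq p q w = filter (\<lambda>\<mu>. fst (snd \<mu>) = q) (Rp p w)"
  by (simp add: Rpq_def Rp_def conj_commute)
lemma Spq_Sp: "Spq p q w = filter (\<lambda>\<mu>. fst (snd \<mu>) = q) (Sp p w)"
  by (simp add: Spq_def Sp_def conj_commute)

definition spl :: "('p,'v) msg list \<Rightarrow> ('p,'v) act list" where
  "spl l = concat (map split_msg l)"

lemma spl_simps[simp]: "spl [] = []" "spl (xs @ ys) = spl xs @ spl ys"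
  "spl (Msg p q m # l) = Snd p q m # Rcv p q m # spl l"
  by (auto simp: spl_def)

lemma length_spl[simp]: "length (spl l) = 2 * length l"
proof (induction l)
  case (Cons x l) then show ?case by (cases x) auto
qed simp

lemma msnd_mrcv_spl: "msnd (spl l) = mrcv (spl l)"
proof (induction l)
  case (Cons x l) then show ?case by (cases x) auto
qed simp

lemma Sp_Rp_spl: "Sp p (spl l) = Rp p (spl l)"
  by (simp add: Sp_def Rp_def msnd_mrcv_spl)
lemma Spq_Rpq_spl: "Spq p q (spl l) = Rpq p q (spl l)"
  by (simp add: Spq_def Rpq_def msnd_mrcv_spl)

lemma ch_run_append: "ch_run A \<chi> (xs @ ys) = (case ch_run A \<chi> xs of None \<Rightarrow> None | Some \<chi>' \<Rightarrow> ch_run A \<chi>' ys)"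
  by (induction xs arbitrary: \<chi>) (auto split: option.split)

lemma compliant_prefix: "compliant A (xs @ ys) \<Longrightarrow> compliant A xs"
  by (auto simp: compliant_def ch_run_append split: option.splits)

lemma compliant_prefix': "compliant A ys \<Longrightarrow> prefix xs ys \<Longrightarrow> compliant A xs"
  by (auto simp: prefix_def intro: compliant_prefix)

lemma drop_fifo_remove:
  assumes "prefix R S"
  shows "fifo_remove \<mu> (drop (length R) S) = (if prefix (R @ [\<mu>]) S then Some (drop (Suc (length R)) S) else None)"
proof -
  obtain T where S: "S = R @ T" using assms prefix_def by blast
  show ?thesis by (cases T) (auto simp: S)
qed

lemma prefix_length_eq: "prefix xs ys \<Longrightarrow> length ys \<le> length xs \<Longrightarrow> xs = ys"
  by (auto simp: prefix_def)

lemma prefix_strict_next: "prefix xs ys \<Longrightarrow> xs \<noteq> ys \<Longrightarrow> \<exists>y. prefix (xs @ [y]) ys"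
proof -
  assume "prefix xs ys" "xs \<noteq> ys"
  then obtain z zs where "ys = xs @ z # zs" by (metis append_Nil2 neq_Nil_conv prefix_def)
  then show ?thesis by (intro exI[of _ z]) (simp add: prefix_def)
qed

lemma ch_run_single: "ch_run A \<chi> [a] = ch_step A \<chi> a"
  by (simp split: option.split)

lemma compliant_snoc_iff: "compliant A (w @ [a]) \<longleftrightarrow> (\<exists>\<chi>. ch_run A (chi0 A) w = Some \<chi> \<and> ch_step A \<chi> a \<noteq> None)"
  by (auto simp: compliant_def ch_run_append ch_run_single split: option.splits)

subsection \<open>sb\<close>

definition sbst :: "('p,'v) act list \<Rightarrow> 'p \<Rightarrow> ('p \<times> 'p \<times> 'v) list" where
  "sbst w = (\<lambda>p. drop (length (Rp p w)) (Sp p w))"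

definition sben :: "('p,'v) act list \<Rightarrow> ('p,'v) act \<Rightarrow> bool" where
  "sben w a = (\<forall>p q m. a = Rcv p q m \<longrightarrow> prefix (Rp p w @ [(p,q,m)]) (Sp p w))"

lemma sb_step:
  assumes "\<forall>p. prefix (Rp p w) (Sp p w)"
  shows "ch_step sb (sbst w) a = (if sben w a then Some (sbst (w @ [a])) else None)"
    and "sben w a \<Longrightarrow> \<forall>p. prefix (Rp p (w@[a])) (Sp p (w@[a]))"
proof -
  show "ch_step sb (sbst w) a = (if sben w a then Some (sbst (w @ [a])) else None)"
  proof (cases a)
    case (Snd p q m)
    have "length (Rp p w) \<le> length (Sp p w)" using assms prefix_length_le by blast
    then show ?thesis using Snd
      by (auto simp: sb_def fifo_insert_def sbst_def sben_def fun_eq_iff)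
  next
    case (Rcv p q m)
    show ?thesis using Rcv assms drop_fifo_remove[of "Rp p w" "Sp p w" "(p,q,m)"]
      by (auto simp: sb_def sbst_def sben_def fun_eq_iff)
  qed
  show "sben w a \<Longrightarrow> \<forall>p. prefix (Rp p (w@[a])) (Sp p (w@[a]))"
  proof (cases a)
    case (Snd p q m)
    then show ?thesis using assms by (auto intro: prefix_order.trans)
  next
    case (Rcv p q m)
    then show "sben w a \<Longrightarrow> ?thesis" using assms by (auto simp: sben_def)
  qed
qed

lemma sb_inv: "compliant sb w \<Longrightarrow> ch_run sb (chi0 sb) w = Some (sbst w) \<and> (\<forall>p. prefix (Rp p w) (Sp p w))"
proof (induction w rule: rev_induct)
  case Nil then show ?case by (simp add: chi0_def sb_def sbst_def fun_eq_iff)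
next
  case (snoc a w)
  then have IH: "ch_run sb (chi0 sb) w = Some (sbst w)" "\<forall>p. prefix (Rp p w) (Sp p w)"
    using compliant_prefix by blast+
  have "ch_run sb (chi0 sb) (w @ [a]) = ch_step sb (sbst w) a" by (simp add: ch_run_append IH split: option.split)
  then show ?case using snoc.prems sb_step[OF IH(2), of a]
    by (auto simp: compliant_def split: if_splits)
qed

lemma sb_snoc: "compliant sb (w @ [a]) \<longleftrightarrow> compliant sb w \<and> sben w a"
proof
  assume c: "compliant sb (w @ [a])"
  then have cw: "compliant sb w" using compliant_prefix by blast
  from sb_inv[OF cw] c sb_step(1)[of w a] show "compliant sb w \<and> sben w a"
    by (auto simp: compliant_snoc_iff cw split: if_splits)
next
  assume "compliant sb w \<and> sben w a"
  then show "compliant sb (w @ [a])" using sb_inv[of w] sb_step(1)[of w a]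
    by (auto simp: compliant_snoc_iff)
qed

lemma sb_emp: "compliant sb w \<Longrightarrow> ch_run sb (chi0 sb) w = Some (chi0 sb) \<longleftrightarrow> (\<forall>p. Rp p w = Sp p w)"
proof -
  assume c: "compliant sb w"
  have "sbst w = chi0 sb \<longleftrightarrow> (\<forall>p. Rp p w = Sp p w)"
    using sb_inv[OF c]
    by (auto simp: sbst_def chi0_def sb_def fun_eq_iff prefix_length_le prefix_length_eq)
  then show ?thesis using sb_inv[OF c] by simp
qed

subsection \<open>p2p\<close>

definition ppst :: "('p,'v) act list \<Rightarrow> 'p \<times> 'p \<Rightarrow> ('p \<times> 'p \<times> 'v) list" where
  "ppst w = (\<lambda>c. drop (length (Rpq (fst c) (snd c) w)) (Spq (fst c) (snd c) w))"

definition ppen :: "('p,'v) act list \<Rightarrow> ('p,'v) act \<Rightarrow> bool" where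
  "ppen w a = (\<forall>p q m. a = Rcv p q m \<longrightarrow> prefix (Rpq p q w @ [(p,q,m)]) (Spq p q w))"

lemma pp_step:
  assumes "\<forall>p q. prefix (Rpq p q w) (Spq p q w)"
  shows "ch_step p2p (ppst w) a = (if ppen w a then Some (ppst (w @ [a])) else None)"
    and "ppen w a \<Longrightarrow> \<forall>p q. prefix (Rpq p q (w@[a])) (Spq p q (w@[a]))"
proof -
  show "ch_step p2p (ppst w) a = (if ppen w a then Some (ppst (w @ [a])) else None)"
  proof (cases a)
    case (Snd p q m)
    have "length (Rpq p q w) \<le> length (Spq p q w)" using assms prefix_length_le by blast
    then show ?thesis using Snd
      by (auto simp: p2p_def fifo_insert_def ppst_def ppen_def fun_eq_iff)
  next
    case (Rcv p q m)
    show ?thesis using Rcv assms drop_fifo_remove[of "Rpq p q w" "Spq p q w" "(p,q,m)"]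
      by (auto simp: p2p_def ppst_def ppen_def fun_eq_iff)
  qed
  show "ppen w a \<Longrightarrow> \<forall>p q. prefix (Rpq p q (w@[a])) (Spq p q (w@[a]))"
  proof (cases a)
    case (Snd p q m)
    then show ?thesis using assms by (auto intro: prefix_order.trans)
  next
    case (Rcv p q m)
    then show "ppen w a \<Longrightarrow> ?thesis" using assms by (auto simp: ppen_def)
  qed
qed

lemma pp_inv: "compliant p2p w \<Longrightarrow> ch_run p2p (chi0 p2p) w = Some (ppst w) \<and> (\<forall>p q. prefix (Rpq p q w) (Spq p q w))"
proof (induction w rule: rev_induct)
  case Nil then show ?case by (simp add: chi0_def p2p_def ppst_def fun_eq_iff)
next
  case (snoc a w)
  then have IH: "ch_run p2p (chi0 p2p) w = Some (ppst w)" "\<forall>p q. prefix (Rpq p q w) (Spq p q w)"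
    using compliant_prefix by blast+
  have "ch_run p2p (chi0 p2p) (w @ [a]) = ch_step p2p (ppst w) a" by (simp add: ch_run_append IH split: option.split)
  then show ?case using snoc.prems pp_step[OF IH(2), of a]
    by (auto simp: compliant_def split: if_splits)
qed

lemma pp_snoc: "compliant p2p (w @ [a]) \<longleftrightarrow> compliant p2p w \<and> ppen w a"
proof
  assume c: "compliant p2p (w @ [a])"
  then have cw: "compliant p2p w" using compliant_prefix by blast
  from pp_inv[OF cw] c pp_step(1)[of w a] show "compliant p2p w \<and> ppen w a"
    by (auto simp: compliant_snoc_iff cw split: if_splits)
next
  assume "compliant p2p w \<and> ppen w a"
  then show "compliant p2p (w @ [a])" using pp_inv[of w] pp_step(1)[of w a]
    by (auto simp: compliant_snoc_iff)
qed

lemma pp_emp: "compliant p2p w \<Longrightarrow> ch_run p2p (chi0 p2p) w = Some (chi0 p2p) \<longleftrightarrow> (\<forall>p q. Rpq p q w = Spq p q w)"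
proof -
  assume c: "compliant p2p w"
  have "ppst w = chi0 p2p \<longleftrightarrow> (\<forall>p q. Rpq p q w = Spq p q w)"
    using pp_inv[OF c]
    by (auto simp: ppst_def chi0_def p2p_def fun_eq_iff prefix_length_le prefix_length_eq)
  then show ?thesis using pp_inv[OF c] by simp
qed

subsection \<open>bag\<close>

definition bgst :: "('p,'v) act list \<Rightarrow> unit \<Rightarrow> ('p \<times> 'p \<times> 'v) multiset" where
  "bgst w = (\<lambda>_. mset (msnd w) - mset (mrcv w))"

definition bgen :: "('p,'v) act list \<Rightarrow> ('p,'v) act \<Rightarrow> bool" where
  "bgen w a = (\<forall>p q m. a = Rcv p q m \<longrightarrow> count (mset (mrcv w)) (p,q,m) < count (mset (msnd w)) (p,q,m))"

lemma bg_step: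
  assumes "mset (mrcv w) \<subseteq># mset (msnd w)"
  shows "ch_step bag (bgst w) a = (if bgen w a then Some (bgst (w @ [a])) else None)"
    and "bgen w a \<Longrightarrow> mset (mrcv (w@[a])) \<subseteq># mset (msnd (w@[a]))"
proof -
  show "ch_step bag (bgst w) a = (if bgen w a then Some (bgst (w @ [a])) else None)"
  proof (cases a)
    case (Snd p q m)
    then show ?thesis using assms
      by (auto simp: bag_def bag_insert_def bgst_def bgen_def fun_eq_iff multiset_eq_iff subseteq_mset_def Suc_diff_le)
  next
    case (Rcv p q m)
    show ?thesis using Rcv assms
      by (auto simp: bag_def bag_remove_def bgst_def bgen_def fun_eq_iff multiset_eq_iff subseteq_mset_def
          in_diff_count)
  qed
  show "bgen w a \<Longrightarrow> mset (mrcv (w@[a])) \<subseteq># mset (msnd (w@[a]))"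
  proof (cases a)
    case (Snd p q m)
    then show ?thesis using assms by (auto simp: subseteq_mset_def le_Suc_eq)
  next
    case (Rcv p q m)
    then show "bgen w a \<Longrightarrow> ?thesis" using assms
      by (auto simp: bgen_def subseteq_mset_def Suc_le_eq)
  qed
qed

lemma bg_inv: "compliant bag w \<Longrightarrow> ch_run bag (chi0 bag) w = Some (bgst w) \<and> mset (mrcv w) \<subseteq># mset (msnd w)"
proof (induction w rule: rev_induct)
  case Nil then show ?case by (simp add: chi0_def bag_def bgst_def fun_eq_iff)
next
  case (snoc a w)
  then have IH: "ch_run bag (chi0 bag) w = Some (bgst w)" "mset (mrcv w) \<subseteq># mset (msnd w)"
    using compliant_prefix by blast+
  have "ch_run bag (chi0 bag) (w @ [a]) = ch_step bag (bgst w) a" by (simp add: ch_run_append IH split: option.split)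
  then show ?case using snoc.prems bg_step[OF IH(2), of a]
    by (auto simp: compliant_def split: if_splits)
qed

lemma bg_snoc: "compliant bag (w @ [a]) \<longleftrightarrow> compliant bag w \<and> bgen w a"
proof
  assume c: "compliant bag (w @ [a])"
  then have cw: "compliant bag w" using compliant_prefix by blast
  from bg_inv[OF cw] c bg_step(1)[of w a] show "compliant bag w \<and> bgen w a"
    by (auto simp: compliant_snoc_iff cw split: if_splits)
next
  assume "compliant bag w \<and> bgen w a"
  then show "compliant bag (w @ [a])" using bg_inv[of w] bg_step(1)[of w a]
    by (auto simp: compliant_snoc_iff)
qed

lemma bg_emp: "compliant bag w \<Longrightarrow> ch_run bag (chi0 bag) w = Some (chi0 bag) \<longleftrightarrow> mset (mrcv w) = mset (msnd w)"
proof -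
  assume c: "compliant bag w"
  have "bgst w = chi0 bag \<longleftrightarrow> mset (mrcv w) = mset (msnd w)"
    using bg_inv[OF c]
    by (auto simp: bgst_def chi0_def bag_def fun_eq_iff subset_mset.antisym
        Diff_eq_empty_iff_mset)
  then show ?thesis using bg_inv[OF c] by simp
qed

lemma prefix_filter_mono: "prefix x y \<Longrightarrow> prefix (filter P x) (filter P y)"
  by (auto simp: prefix_def)

lemma SR_mono:
  assumes "prefix x y"
  shows "prefix (Sp p x) (Sp p y)" "prefix (Rp p x) (Rp p y)"
    "prefix (Spq p q x) (Spq p q y)" "prefix (Rpq p q x) (Rpq p q y)"
  using assms by (auto simp: prefix_def)

lemma count_prefix_mono: "prefix x y \<Longrightarrow> count (mset x) a \<le> count (mset y) a"
  by (auto simp: prefix_def)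

lemma count_prefix_snoc: "prefix (x @ [a]) y \<Longrightarrow> count (mset x) a < count (mset y) a"
  by (auto simp: prefix_def)

lemma cnt_mrcv: "count (mset (mrcv w)) (p,q,m) = count (mset (Rpq p q w)) (p,q,m)"
  by (simp add: Rpq_def mset_filter)
lemma cnt_msnd: "count (mset (msnd w)) (p,q,m) = count (mset (Spq p q w)) (p,q,m)"
  by (simp add: Spq_def mset_filter)

lemma set_Spq: "y \<in> set (Spq p q w) \<Longrightarrow> \<exists>m. y = (p,q,m)"
  by (auto simp: Spq_def intro!: exI[of _ "snd (snd y)"])

lemma pp_bag: "compliant p2p w \<Longrightarrow> compliant bag w"
proof (induction w rule: rev_induct)
  case Nil then show ?case by (simp add: compliant_def)
next
  case (snoc a w)
  then have cw: "compliant p2p w" "ppen w a" using pp_snoc by blast+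
  have "bgen w a" using cw(2)
    by (auto simp: ppen_def bgen_def cnt_mrcv cnt_msnd intro: count_prefix_snoc)
  then show ?case using snoc.IH cw bg_snoc by blast
qed

lemma pp_bag_emp:
  assumes "compliant p2p w"
  shows "(ch_run p2p (chi0 p2p) w = Some (chi0 p2p)) \<longleftrightarrow> (ch_run bag (chi0 bag) w = Some (chi0 bag))"
proof -
  have "(\<forall>p q. Rpq p q w = Spq p q w) \<longleftrightarrow> mset (mrcv w) = mset (msnd w)"
  proof
    assume "\<forall>p q. Rpq p q w = Spq p q w"
    then show "mset (mrcv w) = mset (msnd w)"
      by (auto simp: multiset_eq_iff cnt_mrcv cnt_msnd)
  next
    assume eq: "mset (mrcv w) = mset (msnd w)"
    show "\<forall>p q. Rpq p q w = Spq p q w"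
    proof (intro allI, rule ccontr)
      fix p q assume ne: "Rpq p q w \<noteq> Spq p q w"
      have pr: "prefix (Rpq p q w) (Spq p q w)" using pp_inv[OF assms] by blast
      then obtain y where y: "prefix (Rpq p q w @ [y]) (Spq p q w)" using prefix_strict_next ne by blast
      then have yin: "y \<in> set (Spq p q w)" by (auto simp: prefix_def)
      obtain m where ym: "y = (p,q,m)" using set_Spq[OF yin] by auto
      have "count (mset (Rpq p q w)) y < count (mset (Spq p q w)) y" by (rule count_prefix_snoc[OF y])
      then show False using eq ym cnt_mrcv[of w p q m] cnt_msnd[of w p q m] by simp
    qed
  qed
  then show ?thesis using pp_emp[OF assms] bg_emp[OF pp_bag[OF assms]] by simp
qed

lemma PFX:
  assumes "prefix R S" "\<forall>q. filter (\<lambda>x. f x = q) R = filter (\<lambda>x. f x = q) S"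
  shows "R = S"
proof (rule ccontr)
  assume "R \<noteq> S"
  then obtain y T where S: "S = R @ y # T" using assms(1)
    by (metis append_Nil2 neq_Nil_conv prefix_def)
  have "filter (\<lambda>x. f x = f y) R = filter (\<lambda>x. f x = f y) S" using assms(2) by blast
  then show False using S by simp
qed

lemma sb_pp: "compliant sb w \<Longrightarrow> compliant p2p w"
proof (induction w rule: rev_induct)
  case Nil then show ?case by (simp add: compliant_def)
next
  case (snoc a w)
  then have cw: "compliant sb w" "sben w a" using sb_snoc by blast+
  have "ppen w a"
  proof (unfold ppen_def, intro allI impI)
    fix p q m assume a: "a = Rcv p q m"
    then have "prefix (Rp p w @ [(p,q,m)]) (Sp p w)" using cw(2) by (simp add: sben_def)
    from prefix_filter_mono[OF this, of "\<lambda>\<mu>. fst (snd \<mu>) = q"]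
    show "prefix (Rpq p q w @ [(p,q,m)]) (Spq p q w)" by (simp add: Rpq_Rp Spq_Sp)
  qed
  then show ?case using snoc.IH cw pp_snoc by blast
qed

lemma sb_pp_emp:
  assumes "compliant sb w"
  shows "(ch_run sb (chi0 sb) w = Some (chi0 sb)) \<longleftrightarrow> (ch_run p2p (chi0 p2p) w = Some (chi0 p2p))"
proof -
  have "(\<forall>p. Rp p w = Sp p w) \<longleftrightarrow> (\<forall>p q. Rpq p q w = Spq p q w)"
  proof
    assume "\<forall>p. Rp p w = Sp p w" then show "\<forall>p q. Rpq p q w = Spq p q w" by (simp add: Rpq_Rp Spq_Sp)
  next
    assume a: "\<forall>p q. Rpq p q w = Spq p q w"
    show "\<forall>p. Rp p w = Sp p w"
    proof
      fix p
      show "Rp p w = Sp p w"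
        using PFX[of "Rp p w" "Sp p w" "\<lambda>\<mu>. fst (snd \<mu>)"] sb_inv[OF assms] a by (simp add: Rpq_Rp Spq_Sp)
    qed
  qed
  then show ?thesis using sb_emp[OF assms] pp_emp[OF sb_pp[OF assms]] by simp
qed

subsection \<open>bag + fits implies p2p\<close>

lemma C1:
  assumes "compliant bag v" "\<forall>r. prefix (pj r v) (pj r (spl h))"
  shows "compliant p2p v"
  using assms
proof (induction v rule: rev_induct)
  case Nil then show ?case by (simp add: compliant_def)
next
  case (snoc a v)
  have fv: "\<forall>r. prefix (pj r v) (pj r (spl h))"
  proof
    fix r
    have "prefix (pj r v) (pj r (v @ [a]))" by (rule prefix_filter_mono) simp
    then show "prefix (pj r v) (pj r (spl h))" using snoc.prems(2) prefix_order.trans by blast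
  qed
  have cv: "compliant bag v" "bgen v a" using snoc.prems(1) bg_snoc by blast+
  have pv: "compliant p2p v" using snoc.IH cv fv by blast
  have "ppen v a"
  proof (unfold ppen_def, intro allI impI)
    fix p q m assume a: "a = Rcv p q m"
    let ?H = "Spq p q (spl h)"
    have c: "count (mset (Rpq p q v)) (p,q,m) < count (mset (Spq p q v)) (p,q,m)"
      using cv(2) a by (simp add: bgen_def cnt_mrcv cnt_msnd)
    have "prefix (Rpq p q (pj q (v @ [a]))) (Rpq p q (pj q (spl h)))"
      using snoc.prems(2) by (intro SR_mono(4)) blast
    then have h1: "prefix (Rpq p q v @ [(p,q,m)]) ?H" using a by (simp add: Rpq_pj Spq_Rpq_spl)
    have "prefix (Spq p q (pj p v)) (Spq p q (pj p (spl h)))"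
      using fv by (intro SR_mono(3)) blast
    then have h2: "prefix (Spq p q v) ?H" by (simp add: Spq_pj)
    show "prefix (Rpq p q v @ [(p,q,m)]) (Spq p q v)"
    proof (cases "prefix (Rpq p q v @ [(p,q,m)]) (Spq p q v)")
      case False
      then have "prefix (Spq p q v) (Rpq p q v @ [(p,q,m)])" using prefix_same_cases[OF h1 h2] by blast
      then have "prefix (Spq p q v) (Rpq p q v)" using False by auto
      then show ?thesis using c count_prefix_mono[of "Spq p q v" "Rpq p q v" "(p,q,m)"] by simp
    qed
  qed
  then show ?case using pv bg_snoc pp_snoc by blast
qed

lemma sb_full_emp:
  assumes "compliant sb w" "\<forall>r. pj r w = pj r (spl h)"
  shows "ch_run sb (chi0 sb) w = Some (chi0 sb)"
proof -
  have "\<forall>p q. Rpq p q w = Spq p q w"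
  proof (intro allI)
    fix p q
    have "Rpq p q w = Rpq p q (pj q (spl h))" using assms(2) Rpq_pj[of p q w] by simp
    also have "\<dots> = Spq p q (pj p (spl h))" by (simp add: Rpq_pj Spq_pj Spq_Rpq_spl)
    also have "\<dots> = Spq p q w" using assms(2) Spq_pj[of p q w] by simp
    finally show "Rpq p q w = Spq p q w" .
  qed
  then show ?thesis using sb_pp_emp[OF assms(1)] pp_emp[OF sb_pp[OF assms(1)]] by simp
qed

lemma spl_rcv_split:
  "spl h = t @ Rcv p q m # rest \<Longrightarrow> \<exists>h1 h2. h = h1 @ Msg p q m # h2 \<and> t = spl h1 @ [Snd p q m]"
proof (induction h arbitrary: t)
  case Nil then show ?case by simp
next
  case (Cons x h)
  obtain a b c where x: "x = Msg a b c" by (cases x)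
  show ?case
  proof (cases t)
    case Nil then show ?thesis using Cons.prems x by simp
  next
    case tC: (Cons y t1)
    show ?thesis
    proof (cases t1)
      case Nil then show ?thesis using Cons.prems x tC by (intro exI[of _ "[]"] exI[of _ h]) auto
    next
      case t1C: (Cons z t2)
      then have "spl h = t2 @ Rcv p q m # rest" using Cons.prems x tC by simp
      from Cons.IH[OF this] obtain h1 h2 where "h = h1 @ Msg p q m # h2" "t2 = spl h1 @ [Snd p q m]" by blast
      then show ?thesis using Cons.prems x tC t1C by (intro exI[of _ "x # h1"] exI[of _ h2]) auto
    qed
  qed
qed

lemma PRE3: "prefix x y \<Longrightarrow> prefix y (x @ e # z) \<Longrightarrow> \<not> prefix (x @ [e]) y \<Longrightarrow> y = x"
proof -
  assume a: "prefix x y" "prefix y (x @ e # z)" "\<not> prefix (x @ [e]) y"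
  obtain y' where y: "y = x @ y'" using a(1) prefix_def by blast
  then have "prefix y' (e # z)" using a(2) by simp
  then show ?thesis using a(3) y by (cases y') auto
qed

lemma snoc_same: "prefix (xs @ [a]) S \<Longrightarrow> prefix (xs @ [b]) S \<Longrightarrow> a = b"
proof -
  assume "prefix (xs @ [a]) S" "prefix (xs @ [b]) S"
  then have "prefix (xs @ [a]) (xs @ [b]) \<or> prefix (xs @ [b]) (xs @ [a])" by (rule prefix_same_cases)
  then show ?thesis by auto
qed

lemma keyB:
  assumes "prefix (Pi @ [\<mu>]) S" "prefix R S"
    "\<forall>q'. prefix (filter (\<lambda>x. fst (snd x) = q') Pi) (filter (\<lambda>x. fst (snd x) = q') R)"
    "filter (\<lambda>x. fst (snd x) = fst (snd \<mu>)) R = filter (\<lambda>x. fst (snd x) = fst (snd \<mu>)) Pi"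
  shows "prefix (R @ [\<mu>]) S"
proof -
  have "prefix Pi (Pi @ [\<mu>])" by simp
  from prefix_order.trans[OF this assms(1)] have pS: "prefix Pi S" .
  have "R = Pi"
  proof (rule ccontr)
    assume ne: "R \<noteq> Pi"
    from prefix_same_cases[OF pS assms(2)] show False
    proof
      assume "prefix Pi R"
      then obtain y where y: "prefix (Pi @ [y]) R" using prefix_strict_next ne[symmetric] by blast
      from prefix_order.trans[OF this assms(2)] have "prefix (Pi @ [y]) S" .
      then have "y = \<mu>" using assms(1) by (rule snoc_same)
      then have "prefix (filter (\<lambda>x. fst (snd x) = fst (snd \<mu>)) (Pi @ [\<mu>])) (filter (\<lambda>x. fst (snd x) = fst (snd \<mu>)) R)"
        using y prefix_filter_mono by blast
      then have "prefix (filter (\<lambda>x. fst (snd x) = fst (snd \<mu>)) Pi @ [\<mu>]) (filter (\<lambda>x. fst (snd x) = fst (snd \<mu>)) Pi)"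
        using assms(4) by simp
      from prefix_length_le[OF this] show False by simp
    next
      assume "prefix R Pi"
      then obtain y where y: "prefix (R @ [y]) Pi" using prefix_strict_next ne by blast
      let ?f = "filter (\<lambda>x. fst (snd x) = fst (snd y))"
      have "prefix (?f (R @ [y])) (?f Pi)" using y prefix_filter_mono by blast
      moreover have "prefix (?f Pi) (?f R)" using assms(3) by blast
      ultimately have "prefix (?f (R @ [y])) (?f R)" by (rule prefix_order.trans)
      from prefix_length_le[OF this] show False by simp
    qed
  qed
  then show ?thesis using assms(1) by simp
qed

lemma pj_snoc_other: "actor e \<noteq> r \<Longrightarrow> pj r (xs @ [e]) = pj r xs"
  by (simp add: in_Sigma_p)
lemma pj_snoc_same: "pj (actor e) (xs @ [e]) = pj (actor e) xs @ [e]"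
  by (simp add: in_Sigma_p)
lemma pj_Cons_same: "pj (actor e) (e # xs) = e # pj (actor e) xs"
  by (simp add: in_Sigma_p)

lemma C2:
  fixes h :: "('p,'v) msg list"
  shows "\<forall>t v. spl h = t @ rest \<longrightarrow> compliant sb v \<longrightarrow>
     (\<forall>r. prefix (pj r t) (pj r v) \<and> prefix (pj r v) (pj r (spl h))) \<longrightarrow>
     (\<exists>x. compliant sb (v @ x) \<and> (\<forall>r. pj r (v @ x) = pj r (spl h)))"
proof (induction rest)
  case Nil
  show ?case
  proof (intro allI impI)
    fix t v :: "('p,'v) act list"
    assume "spl h = t @ []" "compliant sb v" "\<forall>r. prefix (pj r t) (pj r v) \<and> prefix (pj r v) (pj r (spl h))"
    then show "\<exists>x. compliant sb (v @ x) \<and> (\<forall>r. pj r (v @ x) = pj r (spl h))"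
      by (intro exI[of _ "[]"]) (auto intro: prefix_order.antisym)
  qed
next
  case (Cons e rest)
  show ?case
  proof (intro allI impI)
    fix t v :: "('p,'v) act list"
    have IH: "\<And>t v. spl h = t @ rest \<Longrightarrow> compliant sb v \<Longrightarrow>
     (\<forall>r. prefix (pj r t) (pj r v) \<and> prefix (pj r v) (pj r (spl h))) \<Longrightarrow>
     (\<exists>x. compliant sb (v @ x) \<and> (\<forall>r. pj r (v @ x) = pj r (spl h)))"
      using Cons.IH by blast
    assume s: "spl h = t @ e # rest" and cv: "compliant sb v"
      and fit: "\<forall>r. prefix (pj r t) (pj r v) \<and> prefix (pj r v) (pj r (spl h))"
    have s': "spl h = (t @ [e]) @ rest" using s by simp
    show "\<exists>x. compliant sb (v @ x) \<and> (\<forall>r. pj r (v @ x) = pj r (spl h))"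
    proof (cases "\<forall>r. prefix (pj r (t @ [e])) (pj r v)")
      case True
      then have "\<forall>r. prefix (pj r (t @ [e])) (pj r v) \<and> prefix (pj r v) (pj r (spl h))" using fit by blast
      from IH[OF s' cv this] show ?thesis .
    next
      case False
      then obtain r0 where nr0: "\<not> prefix (pj r0 (t @ [e])) (pj r0 v)" by blast
      define r where "r = actor e"
      have r0: "r0 = r"
      proof (rule ccontr)
        assume "r0 \<noteq> r"
        then have "pj r0 (t @ [e]) = pj r0 t" using pj_snoc_other[of e r0 t] r_def by simp
        then show False using nr0 fit by simp
      qed
      have hs: "pj r (spl h) = pj r t @ e # pj r rest" unfolding s r_def by (simp add: in_Sigma_p)
      have n1: "\<not> prefix (pj r t @ [e]) (pj r v)" using nr0 r0 pj_snoc_same[of e t] r_def by simp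
      have f1: "prefix (pj r t) (pj r v)" "prefix (pj r v) (pj r (spl h))" using fit by auto
      have eq: "pj r v = pj r t"
        using PRE3[of "pj r t" "pj r v" e "pj r rest", OF f1(1) _ n1] f1(2) hs by simp
      have sen: "sben v e"
      proof (unfold sben_def, intro allI impI)
        fix p q m assume e: "e = Rcv p q m"
        then have rq: "r = q" by (simp add: r_def)
        obtain h1 h2 where t: "t = spl h1 @ [Snd p q m]"
          using spl_rcv_split[of h t p q m rest] s e by blast
        define Pi where "Pi = Sp p (spl h1)"
        have "prefix (pj p t) (pj p v)" using fit by blast
        from SR_mono(1)[OF this] have "prefix (Sp p (pj p t)) (Sp p (pj p v))" .
        then have a: "prefix (Pi @ [(p,q,m)]) (Sp p v)" by (simp add: Sp_pj Pi_def t)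
        have b: "prefix (Rp p v) (Sp p v)" using sb_inv[OF cv] by blast
        have c: "\<forall>q'. prefix (filter (\<lambda>x. fst (snd x) = q') Pi) (filter (\<lambda>x. fst (snd x) = q') (Rp p v))"
        proof
          fix q'
          have e1: "filter (\<lambda>x. fst (snd x) = q') Pi = Rpq p q' (pj q' t)"
            unfolding Rpq_pj by (simp add: Pi_def Sp_Rp_spl Rpq_Rp t)
          have "prefix (pj q' t) (pj q' v)" using fit by blast
          from SR_mono(4)[OF this] have "prefix (Rpq p q' (pj q' t)) (Rpq p q' (pj q' v))" .
          moreover have "Rpq p q' (pj q' v) = filter (\<lambda>x. fst (snd x) = q') (Rp p v)" unfolding Rpq_pj by (simp add: Rpq_Rp)
          ultimately show "prefix (filter (\<lambda>x. fst (snd x) = q') Pi) (filter (\<lambda>x. fst (snd x) = q') (Rp p v))"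
            using e1 by simp
        qed
        have "filter (\<lambda>x. fst (snd x) = q) (Rp p v) = Rpq p q (pj q v)" unfolding Rpq_pj by (simp add: Rpq_Rp)
        also have "\<dots> = Rpq p q (pj q t)" using eq rq by simp
        also have "\<dots> = filter (\<lambda>x. fst (snd x) = q) Pi" unfolding Rpq_pj by (simp add: Pi_def Sp_Rp_spl Rpq_Rp t)
        finally have d: "filter (\<lambda>x. fst (snd x) = fst (snd (p,q,m))) (Rp p v) = filter (\<lambda>x. fst (snd x) = fst (snd (p,q,m))) Pi"
          by simp
        show "prefix (Rp p v @ [(p,q,m)]) (Sp p v)" using keyB[OF a b c d] .
      qed
      have cv': "compliant sb (v @ [e])" using sb_snoc cv sen by blast
      have fit': "\<forall>r'. prefix (pj r' (t @ [e])) (pj r' (v @ [e])) \<and> prefix (pj r' (v @ [e])) (pj r' (spl h))"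
      proof
        fix r'
        show "prefix (pj r' (t @ [e])) (pj r' (v @ [e])) \<and> prefix (pj r' (v @ [e])) (pj r' (spl h))"
        proof (cases "r' = r")
          case True
          then show ?thesis using hs eq pj_snoc_same[of e t] pj_snoc_same[of e v] r_def by simp
        next
          case False
          then show ?thesis using fit pj_snoc_other[of e r' t] pj_snoc_other[of e r' v] r_def by simp
        qed
      qed
      obtain x where "compliant sb ((v @ [e]) @ x)" "\<forall>r. pj r ((v @ [e]) @ x) = pj r (spl h)"
        using IH[OF s' cv' fit'] by blast
      then show ?thesis by (intro exI[of _ "e # x"]) simp
    qed
  qed
qed

lemma C2':
  assumes "compliant sb v" "\<forall>r. prefix (pj r v) (pj r (spl h))"
  shows "\<exists>x. compliant sb (v @ x) \<and> (\<forall>r. pj r (v @ x) = pj r (spl h))"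
  using C2[of h "spl h"] assms by simp

lemma enum_card:
  fixes S :: "nat set"
  assumes "infinite S"
  shows "card {i \<in> S. i < enumerate S k} = k"
proof -
  have "{i \<in> S. i < enumerate S k} = enumerate S ` {..<k}"
  proof
    show "{i \<in> S. i < enumerate S k} \<subseteq> enumerate S ` {..<k}"
    proof
      fix i assume "i \<in> {i \<in> S. i < enumerate S k}"
      then have i: "i \<in> S" "i < enumerate S k" by auto
      obtain j where j: "enumerate S j = i" using enumerate_Ex[OF assms i(1)] by blast
      then have "j < k" using i(2) assms by auto
      then show "i \<in> enumerate S ` {..<k}" using j by auto
    qed
    show "enumerate S ` {..<k} \<subseteq> {i \<in> S. i < enumerate S k}"
      using assms enumerate_in_set by auto
  qed
  moreover have "inj_on (enumerate S) {..<k}" using inj_enumerate[OF assms] by (simp add: inj_on_def inj_def)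
  ultimately show ?thesis by (simp add: card_image)
qed

lemma filter_enum:
  assumes "infinite S" "S = {i. f i \<in> D}"
  shows "filter (\<lambda>a. a \<in> D) (map f [0..<n]) = map (\<lambda>k. f (enumerate S k)) [0..<card {i \<in> S. i < n}]"
proof (induction n)
  case 0 then show ?case by simp
next
  case (Suc n)
  show ?case
  proof (cases "n \<in> S")
    case True
    have set: "{i \<in> S. i < Suc n} = insert n {i \<in> S. i < n}" using True by auto
    have fin: "finite {i \<in> S. i < n}" by auto
    obtain k where k: "enumerate S k = n" using enumerate_Ex[OF assms(1) True] by blast
    have "card {i \<in> S. i < n} = k" using enum_card[OF assms(1), of k] k by simp
    then have "enumerate S (card {i \<in> S. i < n}) = n" using k by simp
    then show ?thesis using Suc True set fin assms(2) by simp
  next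
    case False
    have set: "{i \<in> S. i < Suc n} = {i \<in> S. i < n}" using False by (auto simp: less_Suc_eq)
    then show ?thesis using Suc False assms(2) by simp
  qed
qed

subsection \<open>prefix characterisation of projections\<close>

lemma fprefix_Inf: "fprefix u (Inf f) \<longleftrightarrow> u = map f [0..<length u]"
  by simp

lemma fprefix_prefix: "prefix v u \<Longrightarrow> fprefix u w \<Longrightarrow> fprefix v w"
proof (cases w)
  case (Fin x)
  assume "prefix v u" "fprefix u w" then show ?thesis using Fin by (auto simp: prefix_def)
next
  case (Inf f)
  assume a: "prefix v u" "fprefix u w"
  then obtain z where u: "u = v @ z" by (auto simp: prefix_def)
  have "u = map f [0..<length u]" using a(2) Inf by simp
  then have "v @ z = map f [0..<length v] @ map f [length v..<length v + length z]"
    using u by (simp add: upt_add_eq_append[of 0 "length v" "length z"])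
  then have "v = map f [0..<length v]" by (simp add: append_eq_append_conv)
  then show ?thesis using Inf by simp
qed

lemma ex_bound: fixes f :: "nat \<Rightarrow> 'a" shows "finite {i. f i \<in> D} \<Longrightarrow> \<exists>N. \<forall>i\<ge>N. f i \<notin> D"
  using finite_nat_bounded[of "{i. f i \<in> D}"] by (auto simp: not_less[symmetric])

lemma least_bound:
  fixes f :: "nat \<Rightarrow> 'a"
  assumes "finite {i. f i \<in> D}"
  defines "L \<equiv> LEAST N. \<forall>i\<ge>N. f i \<notin> D"
  shows "\<forall>i\<ge>L. f i \<notin> D"
  using LeastI_ex[OF ex_bound[OF assms(1)]] unfolding L_def by blast

lemma filter_beyond:
  assumes "\<forall>i\<ge>L. f i \<notin> D" "L \<le> n"
  shows "filter (\<lambda>a. a \<in> D) (map f [0..<n]) = filter (\<lambda>a. a \<in> D) (map f [0..<L])"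
proof -
  have "[0..<n] = [0..<L] @ [L..<n]" using assms(2) upt_add_eq_append[of 0 L "n - L"] by simp
  moreover have "filter (\<lambda>a. a \<in> D) (map f [L..<n]) = []" using assms(1) by (auto simp: filter_empty_conv)
  ultimately show ?thesis by simp
qed

lemma LP1: "fprefix u w \<Longrightarrow> fprefix (filter (\<lambda>a. a \<in> D) u) (wproj D w)"
proof (cases w)
  case (Fin x)
  assume "fprefix u w" then show ?thesis using Fin by auto
next
  case (Inf f)
  assume a: "fprefix u w"
  then have u: "u = map f [0..<length u]" using Inf by simp
  show ?thesis
  proof (cases "infinite {i. f i \<in> D}")
    case True
    have "filter (\<lambda>a. a \<in> D) u = map (\<lambda>k. f (enumerate {i. f i \<in> D} k)) [0..<card {i \<in> {i. f i \<in> D}. i < length u}]"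
      using filter_enum[OF True refl, of "length u"] u by metis
    then show ?thesis using Inf True by simp
  next
    case False
    define L where "L = (LEAST N. \<forall>i\<ge>N. f i \<notin> D)"
    have L: "\<forall>i\<ge>L. f i \<notin> D" using least_bound[of f D] False unfolding L_def by blast
    have w: "wproj D w = Fin (filter (\<lambda>a. a \<in> D) (map f [0..<L]))" using Inf False L_def by simp
    show ?thesis
    proof (cases "length u \<le> L")
      case True
      have "[0..<L] = [0..<length u] @ [length u..<L]" using True upt_add_eq_append[of 0 "length u" "L - length u"] by simp
      then show ?thesis using w u by (metis filter_append fprefix.simps(1) map_append)
    next
      case False
      then show ?thesis using w u filter_beyond[OF L, of "length u"] by (metis append_Nil2 fprefix.simps(1) nat_le_linear)
    qed
  qed
qed

lemma LP2: "fprefix v (wproj D w) \<Longrightarrow> \<exists>u. fprefix u w \<and> prefix v (filter (\<lambda>a. a \<in> D) u)"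
proof (cases w)
  case (Fin x)
  assume "fprefix v (wproj D w)" then show ?thesis using Fin
    by (intro exI[of _ x]) (auto simp: prefix_def)
next
  case (Inf f)
  assume a: "fprefix v (wproj D w)"
  show ?thesis
  proof (cases "infinite {i. f i \<in> D}")
    case True
    let ?S = "{i. f i \<in> D}"
    have v: "v = map (\<lambda>k. f (enumerate ?S k)) [0..<length v]" using a Inf True by simp
    let ?u = "map f [0..<enumerate ?S (length v)]"
    have "filter (\<lambda>a. a \<in> D) ?u = map (\<lambda>k. f (enumerate ?S k)) [0..<card {i \<in> ?S. i < enumerate ?S (length v)}]"
      using filter_enum[OF True refl] by blast
    also have "\<dots> = v" using enum_card[OF True] v by simp
    finally show ?thesis using Inf by (intro exI[of _ ?u]) simp
  next
    case False
    define L where "L = (LEAST N. \<forall>i\<ge>N. f i \<notin> D)"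
    have w: "wproj D w = Fin (filter (\<lambda>a. a \<in> D) (map f [0..<L]))" using Inf False L_def by simp
    then show ?thesis using a Inf by (intro exI[of _ "map f [0..<L]"]) (auto simp: prefix_def)
  qed
qed

lemma LPC: "fprefix v (wproj D w) \<longleftrightarrow> (\<exists>u. fprefix u w \<and> prefix v (filter (\<lambda>a. a \<in> D) u))"
  using LP1 LP2 fprefix_prefix by metis

lemma LE: "(\<And>v. fprefix v x \<longleftrightarrow> fprefix v y) \<Longrightarrow> x = y"
proof -
  assume h: "\<And>v. fprefix v x \<longleftrightarrow> fprefix v y"
  show "x = y"
  proof (cases x)
    case (Fin a)
    show ?thesis
    proof (cases y)
      case (Fin b)
      have "fprefix a y" using h[of a] \<open>x = Fin a\<close> by simp
      then have p1: "prefix a b" using Fin by (simp add: prefix_def)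
      have "fprefix b x" using h[of b] Fin by simp
      then have p2: "prefix b a" using \<open>x = Fin a\<close> by (simp add: prefix_def)
      then show ?thesis using \<open>x = Fin a\<close> Fin prefix_order.antisym[OF p1 p2] by simp
    next
      case (Inf g)
      have "fprefix (map g [0..<Suc (length a)]) y" using Inf by simp
      then have "fprefix (map g [0..<Suc (length a)]) x" using h by blast
      then obtain v' where "a = map g [0..<Suc (length a)] @ v'" using \<open>x = Fin a\<close> by auto
      then have "length a = length (map g [0..<Suc (length a)] @ v')" by simp
      then show ?thesis by simp
    qed
  next
    case (Inf f)
    show ?thesis
    proof (cases y)
      case (Fin b)
      have "fprefix (map f [0..<Suc (length b)]) x" using Inf by simp
      then have "fprefix (map f [0..<Suc (length b)]) y" using h by blast
      then obtain v' where "b = map f [0..<Suc (length b)] @ v'" using Fin by auto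
      then have "length b = length (map f [0..<Suc (length b)] @ v')" by simp
      then show ?thesis by simp
    next
      case (Inf g)
      have "\<forall>n. map f [0..<n] = map g [0..<n]"
      proof
        fix n
        have "fprefix (map f [0..<n]) x" using \<open>x = Inf f\<close> by simp
        then show "map f [0..<n] = map g [0..<n]" using h Inf by simp
      qed
      have "\<forall>n. f n = g n"
      proof
        fix n
        have "map f [0..<Suc n] = map g [0..<Suc n]" using \<open>\<forall>n. map f [0..<n] = map g [0..<n]\<close> by blast
        then show "f n = g n" by simp
      qed
      then show ?thesis using Inf \<open>x = Inf f\<close> by auto
    qed
  qed
qed

fun gtake :: "nat \<Rightarrow> 'a word \<Rightarrow> 'a list" where
  "gtake n (Fin l) = take n l" | "gtake n (Inf f) = map f [0..<n]"

definition pre :: "'a list \<Rightarrow> (nat \<Rightarrow> 'a) \<Rightarrow> nat \<Rightarrow> 'a" where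
  "pre z f n = (if n < length z then z ! n else f (n - length z))"

definition sig :: "(nat \<Rightarrow> ('p,'v) msg) \<Rightarrow> nat \<Rightarrow> ('p,'v) act" where
  "sig g n = split_msg (g (n div 2)) ! (n mod 2)"

lemma split_Fin: "split_word (Fin l) = Fin (spl l)" by (simp add: spl_def)
lemma split_Inf: "split_word (Inf g) = Inf (sig g)" by (simp add: sig_def fun_eq_iff)

lemma spl_nth: "n < 2 * length l \<Longrightarrow> spl l ! n = split_msg (l ! (n div 2)) ! (n mod 2)"
proof (induction l arbitrary: n)
  case Nil then show ?case by simp
next
  case (Cons x l)
  obtain a b c where x: "x = Msg a b c" by (cases x)
  show ?case
  proof (cases n)
    case 0 then show ?thesis using x by simp
  next
    case (Suc n1)
    show ?thesis
    proof (cases n1)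
      case 0 then show ?thesis using x Suc by simp
    next
      case (Suc k)
      then have "k < 2 * length l" using Cons.prems \<open>n = Suc n1\<close> by simp
      from Cons.IH[OF this] show ?thesis using x Suc \<open>n = Suc n1\<close> by simp
    qed
  qed
qed

lemma map_sig: "map (sig g) [0..<2 * N] = spl (map g [0..<N])"
  by (rule nth_equalityI) (auto simp: sig_def spl_nth less_mult_imp_div_less)

lemma map_pre: "map (pre z f) [0..<n] = (if n \<le> length z then take n z else z @ map f [0..<n - length z])"
  by (rule nth_equalityI) (auto simp: pre_def nth_append min_def)

lemma spl_mono: "prefix a b \<Longrightarrow> prefix (spl a) (spl b)"
  by (auto simp: prefix_def)

lemma gtake_mono: "n \<le> m \<Longrightarrow> prefix (gtake n g) (gtake m g)"
proof (cases g)
  case (Fin l)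
  assume "n \<le> m"
  then have "take n l = take n (take m l)" by (simp add: min_def)
  then show ?thesis using Fin by (metis gtake.simps(1) take_is_prefix)
next
  case (Inf f)
  assume "n \<le> m"
  then have "[0..<m] = [0..<n] @ [n..<m]" using upt_add_eq_append[of 0 n "m - n"] by simp
  then show ?thesis using Inf by (simp add: prefix_def)
qed

lemma SPLITPRE: "fprefix u (split_word g) \<Longrightarrow> prefix u (spl (gtake (length u) g))"
proof (cases g)
  case (Fin l)
  assume a: "fprefix u (split_word g)"
  then have p1: "prefix u (spl l)" using Fin by (simp add: spl_def prefix_def)
  show ?thesis
  proof (cases "length u \<le> length l")
    case False
    then show ?thesis using p1 Fin by simp
  next
    case True
    have "prefix (take (length u) l) l" by (rule take_is_prefix)
    then have p2: "prefix (spl (take (length u) l)) (spl l)" by (rule spl_mono)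
    have "length u \<le> length (spl (take (length u) l))" using True by simp
    then show ?thesis using prefix_length_prefix[OF p1 p2] Fin by simp
  qed
next
  case (Inf f)
  assume a: "fprefix u (split_word g)"
  then have u: "u = map (sig f) [0..<length u]" using Inf by (simp add: sig_def[abs_def])
  have "[0..<2 * length u] = [0..<length u] @ [length u..<2 * length u]"
    using upt_add_eq_append[of 0 "length u" "length u"] by (simp add: mult_2)
  then have "prefix (map (sig f) [0..<length u]) (map (sig f) [0..<2 * length u])" by (simp add: prefix_def)
  then show ?thesis using u Inf map_sig[of f "length u"] by simp
qed

lemma F2:
  assumes fin: "finite (UNIV :: 'p set)"
    and u: "fprefix u w" and eq: "interswap_eq w (split_word g)"
  shows "\<exists>N. \<forall>r::'p. prefix (pj r u) (pj r (spl (gtake N g)))"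
proof -
  have "\<forall>r. \<exists>n. prefix (pj r u) (pj r (spl (gtake n g)))"
  proof
    fix r :: 'p
    have "fprefix (pj r u) (wproj (Sigma_p r) w)" using LP1[OF u] by blast
    then have "fprefix (pj r u) (wproj (Sigma_p r) (split_word g))" using eq by (simp add: interswap_eq_def)
    from LP2[OF this] obtain u' where u': "fprefix u' (split_word g)" "prefix (pj r u) (pj r u')" by blast
    have "prefix u' (spl (gtake (length u') g))" using SPLITPRE[OF u'(1)] .
    then have "prefix (pj r u') (pj r (spl (gtake (length u') g)))" by (rule prefix_filter_mono)
    then show "\<exists>n. prefix (pj r u) (pj r (spl (gtake n g)))" using u'(2) prefix_order.trans by blast
  qed
  then obtain Nf where Nf: "\<forall>r. prefix (pj r u) (pj r (spl (gtake (Nf r) g)))" by metis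
  define N where "N = Max (range Nf)"
  have "\<forall>r. prefix (pj r u) (pj r (spl (gtake N g)))"
  proof
    fix r
    have "Nf r \<le> N" unfolding N_def using fin by simp
    then have "prefix (gtake (Nf r) g) (gtake N g)" by (rule gtake_mono)
    then have "prefix (pj r (spl (gtake (Nf r) g))) (pj r (spl (gtake N g)))"
      by (intro prefix_filter_mono spl_mono)
    then show "prefix (pj r u) (pj r (spl (gtake N g)))" using Nf prefix_order.trans by blast
  qed
  then show ?thesis by blast
qed

lemma F1:
  assumes fin: "finite (UNIV :: 'p set)"
    and eq: "interswap_eq (Fin u) (split_word (g :: ('p,'v) msg word))"
  shows "\<exists>l. g = Fin l"
proof (cases g)
  case (Inf gf)
  have "\<exists>r::'p. infinite {n. sig gf n \<in> Sigma_p r}"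
  proof (rule ccontr)
    assume "\<not> ?thesis"
    then have "finite (\<Union>r. {n. sig gf n \<in> Sigma_p r})" using fin by auto
    moreover have "(\<Union>r. {n. sig gf n \<in> Sigma_p r}) = UNIV" by (auto simp: in_Sigma_p)
    ultimately show False by simp
  qed
  then obtain r where r: "infinite {n. sig gf n \<in> Sigma_p r}" by blast
  have "wproj (Sigma_p r) (Fin u) = wproj (Sigma_p r) (split_word g)"
    using eq by (simp only: interswap_eq_def)
  then have "wproj (Sigma_p r) (Fin u) = wproj (Sigma_p r) (Inf (sig gf))"
    by (simp only: Inf split_Inf)
  moreover have "wproj (Sigma_p r) (Inf (sig gf)) = Inf (\<lambda>n. sig gf (enumerate {i. sig gf i \<in> Sigma_p r} n))"
    using r by simp
  ultimately show ?thesis by simp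
qed simp

lemma WA1:
  assumes "filter (\<lambda>x. x \<in> D) a = filter (\<lambda>x. x \<in> D) b" "fprefix u (Inf (pre a f))"
  shows "\<exists>u'. fprefix u' (Inf (pre b f)) \<and> prefix (filter (\<lambda>x. x \<in> D) u) (filter (\<lambda>x. x \<in> D) u')"
proof -
  have u: "u = map (pre a f) [0..<length u]" using assms(2) by simp
  show ?thesis
  proof (cases "length u \<le> length a")
    case True
    then have "u = take (length u) a" using u map_pre[of a f "length u"] by simp
    then have "prefix u a" by (metis take_is_prefix)
    then have "prefix (filter (\<lambda>x. x \<in> D) u) (filter (\<lambda>x. x \<in> D) b)" using assms(1) prefix_filter_mono by metis
    moreover have "fprefix b (Inf (pre b f))" using map_pre[of b f "length b"] by simp
    ultimately show ?thesis by blast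
  next
    case False
    then have ue: "u = a @ map f [0..<length u - length a]" using u map_pre[of a f "length u"] by simp
    define u' where "u' = b @ map f [0..<length u - length a]"
    have fp: "fprefix u' (Inf (pre b f))"
      using map_pre[of b f "length b + (length u - length a)"] unfolding u'_def by simp
    have "filter (\<lambda>x. x \<in> D) u = filter (\<lambda>x. x \<in> D) u'" using ue assms(1) unfolding u'_def
      by (metis filter_append)
    then show ?thesis using fp by (metis prefix_order.refl)
  qed
qed

lemma WA:
  assumes "filter (\<lambda>x. x \<in> D) a = filter (\<lambda>x. x \<in> D) b"
  shows "wproj D (Inf (pre a f)) = wproj D (Inf (pre b f))"
proof (rule LE)
  fix v
  show "fprefix v (wproj D (Inf (pre a f))) \<longleftrightarrow> fprefix v (wproj D (Inf (pre b f)))"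
    unfolding LPC using WA1[OF assms] WA1[OF assms[symmetric]] prefix_order.trans by meson
qed

lemma sb_spl: "ch_run sb (chi0 sb) (spl l) = Some (chi0 sb)"
proof (induction l)
  case Nil then show ?case by simp
next
  case (Cons x l)
  obtain a b c where x: "x = Msg a b c" by (cases x)
  have "ch_run sb (chi0 sb) [Snd a b c, Rcv a b c] = Some (chi0 sb)"
    by (simp add: sb_def chi0_def fifo_insert_def fun_eq_iff)
  then show ?case using Cons x ch_run_append[of sb "chi0 sb" "[Snd a b c, Rcv a b c]" "spl l"] by simp
qed

lemma sig_shift:
  assumes "\<not> n < 2 * N"
  shows "sig (\<lambda>k. gf (k + N)) (n - 2 * N) = sig gf n"
proof -
  obtain k where n: "n = 2 * N + k" using assms by (metis le_Suc_ex not_less)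
  have "(2 * N + k) div 2 = N + k div 2" by simp
  moreover have "(2 * N + k) mod 2 = k mod 2" by simp
  ultimately show ?thesis using n by (simp add: sig_def add.commute)
qed

lemma pre_spl_sig:
  "pre (spl (map gf [0..<N])) (sig (\<lambda>k. gf (k + N))) = sig gf"
proof
  fix n
  show "pre (spl (map gf [0..<N])) (sig (\<lambda>k. gf (k + N))) n = sig gf n"
  proof (cases "n < 2 * N")
    case True
    have "n div 2 < N" using True by linarith
    then show ?thesis using True by (simp add: pre_def spl_nth sig_def)
  next
    case False
    then show ?thesis using sig_shift[OF False] by (simp add: pre_def)
  qed
qed

lemma EXT:
  assumes fin: "finite (UNIV :: 'p set)" and c: "compliant sb u" and up: "fprefix u w"
    and eq: "interswap_eq w (split_word (g :: ('p,'v) msg word))"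
  shows "\<exists>w'. interswap_eq w' (split_word g) \<and> w' \<in> arch_lang sb \<and> fprefix u w'"
proof -
  obtain N where N: "\<forall>r. prefix (pj r u) (pj r (spl (gtake N g)))" using F2[OF fin up eq] by blast
  show ?thesis
  proof (cases g)
    case (Fin l)
    have "prefix (gtake N g) l" using Fin take_is_prefix by simp
    then have sp: "prefix (spl (gtake N g)) (spl l)" by (rule spl_mono)
    have fits: "\<forall>r. prefix (pj r u) (pj r (spl l))"
    proof
      fix r
      have "prefix (pj r (spl (gtake N g))) (pj r (spl l))" using sp by (rule prefix_filter_mono)
      then show "prefix (pj r u) (pj r (spl l))" using N prefix_order.trans by blast
    qed
    obtain x where x: "compliant sb (u @ x)" "\<forall>r. pj r (u @ x) = pj r (spl l)" using C2'[OF c fits] by blast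
    have "interswap_eq (Fin (u @ x)) (split_word g)"
      unfolding interswap_eq_def Fin split_Fin wproj.simps using x(2) by simp
    moreover have "Fin (u @ x) \<in> arch_lang sb" using x(1) by (simp add: arch_lang_def)
    moreover have "fprefix u (Fin (u @ x))" by simp
    ultimately show ?thesis by blast
  next
    case (Inf gf)
    define h where "h = map gf [0..<N]"
    have fits: "\<forall>r. prefix (pj r u) (pj r (spl h))" using N Inf h_def by simp
    obtain x where x: "compliant sb (u @ x)" "\<forall>r. pj r (u @ x) = pj r (spl h)" using C2'[OF c fits] by blast
    define z where "z = u @ x"
    have emp: "ch_run sb (chi0 sb) z = Some (chi0 sb)" using sb_full_emp[OF x(1) x(2)] z_def by simp
    define g' where "g' = (\<lambda>k. gf (k + N))"
    define w' where "w' = Inf (pre z (sig g'))"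
    have feq: "pre (spl h) (sig g') = sig gf" using pre_spl_sig unfolding h_def g'_def by blast
    have "interswap_eq w' (split_word g)"
      unfolding interswap_eq_def
    proof
      fix p
      have "pj p z = pj p (spl h)" using x(2) z_def by simp
      then have "wproj (Sigma_p p) (Inf (pre z (sig g'))) = wproj (Sigma_p p) (Inf (pre (spl h) (sig g')))"
        by (rule WA)
      then show "wproj (Sigma_p p) w' = wproj (Sigma_p p) (split_word g)"
        unfolding w'_def Inf split_Inf feq .
    qed
    moreover have "w' \<in> arch_lang sb"
    proof -
      have "\<forall>n. compliant sb (map (pre z (sig g')) [0..<n])"
      proof
        fix n
        show "compliant sb (map (pre z (sig g')) [0..<n])"
        proof (cases "n \<le> length z")
          case True
          have "compliant sb z" using x(1) z_def by simp
          moreover have "prefix (take n z) z" by (rule take_is_prefix)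
          ultimately show ?thesis using True map_pre[of z "sig g'" n] compliant_prefix' by simp
        next
          case False
          define k where "k = n - length z"
          have "[0..<2 * k] = [0..<k] @ [k..<2 * k]" using upt_add_eq_append[of 0 k k] by (simp add: mult_2)
          then have "prefix (z @ map (sig g') [0..<k]) (z @ spl (map g' [0..<k]))"
            using map_sig[of g' k] by (simp add: prefix_def) (metis)
          moreover have "compliant sb (z @ spl (map g' [0..<k]))"
            using emp sb_spl[of "map g' [0..<k]"] by (simp add: compliant_def ch_run_append)
          ultimately have "compliant sb (z @ map (sig g') [0..<k])" using compliant_prefix' by blast
          then show ?thesis using False map_pre[of z "sig g'" n] k_def by simp
        qed
      qed
      then show ?thesis unfolding w'_def arch_lang_def by blast
    qed
    moreover have "fprefix u w'"
      using map_pre[of z "sig g'" "length u"] z_def w'_def by simp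
    ultimately show ?thesis by blast
  qed
qed

subsection \<open>facts about sem\<close>

abbreviation EE :: "('s,'p,'v) gproto \<Rightarrow> ('p,'v) act word set" where
  "EE S \<equiv> eq_closure (split_word ` glang S)"

lemma PC: "w \<in> arch_lang A \<Longrightarrow> fprefix u w \<Longrightarrow> compliant A u"
proof (cases w)
  case (Fin x)
  assume "w \<in> arch_lang A" "fprefix u w" then show ?thesis using Fin
    by (auto simp: arch_lang_def intro: compliant_prefix)
next
  case (Inf f)
  assume a: "w \<in> arch_lang A" "fprefix u w"
  then have "u = map f [0..<length u]" using Inf by simp
  moreover have "compliant A (map f [0..<length u])" using a(1) Inf by (auto simp: arch_lang_def)
  ultimately show ?thesis by simp
qed

lemma ALL: "(\<And>u. fprefix u w \<Longrightarrow> compliant A u) \<Longrightarrow> w \<in> arch_lang A"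
proof (cases w)
  case (Fin x)
  assume "\<And>u. fprefix u w \<Longrightarrow> compliant A u"
  then show ?thesis using Fin by (auto simp: arch_lang_def)
next
  case (Inf f)
  assume "\<And>u. fprefix u w \<Longrightarrow> compliant A u"
  then show ?thesis using Inf by (auto simp: arch_lang_def)
qed

lemma Efin_sub: "eq_closure {w \<in> split_word ` glang S. is_fin w} \<subseteq> EE S"
  by (auto simp: eq_closure_def)

lemma S1: "sem A S \<subseteq> arch_lang A"
proof
  fix w assume w: "w \<in> sem A S"
  show "w \<in> arch_lang A"
  proof (cases "w \<in> eq_closure {w \<in> split_word ` glang S. is_fin w} \<inter> arch_lang A")
    case True then show ?thesis by blast
  next
    case False
    then have "\<forall>u. fprefix u w \<longrightarrow> u \<in> pref (EE S \<inter> arch_lang A)" using w by (auto simp: sem_def)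
    then show ?thesis by (intro ALL) (auto simp: pref_def intro: PC)
  qed
qed

lemma S2: "w \<in> sem A S \<Longrightarrow> fprefix u w \<Longrightarrow> \<exists>w' \<in> EE S \<inter> arch_lang A. fprefix u w'"
  using Efin_sub by (auto simp: sem_def pref_def)

lemma S3:
  assumes fin: "finite (UNIV :: 'p set)" and w: "w \<in> EE (S :: ('s,'p,'v) gproto) \<inter> arch_lang A"
  shows "w \<in> sem A S"
proof (cases w)
  case (Fin x)
  obtain g where g: "g \<in> glang S" "interswap_eq w (split_word g)" using w by (auto simp: eq_closure_def)
  obtain l where "g = Fin l" using F1[OF fin] g(2) Fin by blast
  then have "is_fin (split_word g)" by (simp add: is_fin_def)
  then have "w \<in> eq_closure {w \<in> split_word ` glang S. is_fin w}" using g by (auto simp: eq_closure_def)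
  then show ?thesis using w by (simp add: sem_def)
next
  case (Inf f)
  then have "is_inf w" by (simp add: is_inf_def)
  moreover have "\<forall>u. fprefix u w \<longrightarrow> u \<in> pref (EE S \<inter> arch_lang A)" using w by (auto simp: pref_def)
  ultimately show ?thesis by (simp add: sem_def)
qed

definition lstep :: "('q,'p,'v) clts \<Rightarrow> ('p \<Rightarrow> 'q) \<Rightarrow> ('p,'v) act \<Rightarrow> ('p \<Rightarrow> 'q) option" where
  "lstep T Q a = (case ddelta (T (actor a)) (Q (actor a)) a of None \<Rightarrow> None | Some q \<Rightarrow> Some (Q(actor a := q)))"

fun lrun :: "('q,'p,'v) clts \<Rightarrow> ('p \<Rightarrow> 'q) \<Rightarrow> ('p,'v) act list \<Rightarrow> ('p \<Rightarrow> 'q) option" where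
  "lrun T Q [] = Some Q"
| "lrun T Q (a # w) = (case lstep T Q a of None \<Rightarrow> None | Some Q' \<Rightarrow> lrun T Q' w)"

abbreviation linit :: "('q,'p,'v) clts \<Rightarrow> 'p \<Rightarrow> 'q" where
  "linit T \<equiv> (\<lambda>p. dinit (T p))"

lemma lrun_append: "lrun T Q (xs @ ys) = (case lrun T Q xs of None \<Rightarrow> None | Some Q' \<Rightarrow> lrun T Q' ys)"
  by (induction xs arbitrary: Q) (auto split: option.split)

lemma cstep_iff: "cstep A T c a c' \<longleftrightarrow> (\<exists>Q' \<chi>'. lstep T (fst c) a = Some Q' \<and> ch_step A (snd c) a = Some \<chi>' \<and> c' = (Q', \<chi>'))"
  by (auto simp: cstep_def lstep_def split: option.splits)

lemma creach_Nil: "creach A T c [] c' \<longleftrightarrow> c' = c"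
  by (auto elim: creach.cases intro: creach.intros)

lemma creach_Cons: "creach A T c (a # w) c' \<longleftrightarrow> (\<exists>c1. cstep A T c a c1 \<and> creach A T c1 w c')"
  by (blast elim: creach.cases intro: creach.intros)

lemma creach_iff: "creach A T c w c' \<longleftrightarrow> lrun T (fst c) w = Some (fst c') \<and> ch_run A (snd c) w = Some (snd c')"
proof (induction w arbitrary: c)
  case Nil then show ?case by (auto simp: creach_Nil prod_eq_iff)
next
  case (Cons a w)
  show ?case
    unfolding creach_Cons cstep_iff Cons.IH
    by (auto split: option.splits)
qed

lemma creach_det: "creach A T c w c1 \<Longrightarrow> creach A T c w c2 \<Longrightarrow> c1 = c2"
  by (auto simp: creach_iff prod_eq_iff)

lemma cinit_simps[simp]: "fst (cinit A T) = linit T" "snd (cinit A T) = chi0 A"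
  by (auto simp: cinit_def)

lemma reach_iff: "(\<exists>c. creach A T (cinit A T) w c) \<longleftrightarrow> lrun T (linit T) w \<noteq> None \<and> compliant A w"
proof
  assume "\<exists>c. creach A T (cinit A T) w c"
  then show "lrun T (linit T) w \<noteq> None \<and> compliant A w" by (auto simp: creach_iff compliant_def)
next
  assume a: "lrun T (linit T) w \<noteq> None \<and> compliant A w"
  then obtain Q \<chi> where "lrun T (linit T) w = Some Q" "ch_run A (chi0 A) w = Some \<chi>"
    by (auto simp: compliant_def)
  then have "creach A T (cinit A T) w (Q, \<chi>)" by (simp add: creach_iff)
  then show "\<exists>c. creach A T (cinit A T) w c" by blast
qed

lemma creach_snoc: "creach A T c (u @ [a]) c'' \<longleftrightarrow> (\<exists>c'. creach A T c u c' \<and> cstep A T c' a c'')"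
  unfolding creach_iff cstep_iff
  by (auto simp: lrun_append ch_run_append ch_run_single lstep_def split: option.splits)

lemma lang_fin: "Fin w \<in> clts_lang A T \<longleftrightarrow>
   (\<exists>Q. lrun T (linit T) w = Some Q \<and> (\<forall>p. Q p \<in> dfinal (T p))) \<and> ch_run A (chi0 A) w = Some (chi0 A)"
  by (auto simp: clts_lang_def creach_iff cfinal_def)

lemma lang_inf: "Inf f \<in> clts_lang A T \<longleftrightarrow> (\<forall>n. lrun T (linit T) (map f [0..<n]) \<noteq> None \<and> compliant A (map f [0..<n]))"
proof
  assume "Inf f \<in> clts_lang A T"
  then obtain \<rho> where \<rho>: "\<rho> 0 = cinit A T" "\<forall>n. cstep A T (\<rho> n) (f n) (\<rho> (Suc n))"
    by (auto simp: clts_lang_def)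
  have "creach A T (cinit A T) (map f [0..<n]) (\<rho> n)" for n
  proof (induction n)
    case 0 then show ?case using \<rho>(1) by (simp add: creach_Nil)
  next
    case (Suc n)
    have "creach A T (cinit A T) (map f [0..<n] @ [f n]) (\<rho> (Suc n))"
      using creach_snoc Suc \<rho>(2) by blast
    then show ?case by simp
  qed
  then show "\<forall>n. lrun T (linit T) (map f [0..<n]) \<noteq> None \<and> compliant A (map f [0..<n])"
    using reach_iff by blast
next
  assume a: "\<forall>n. lrun T (linit T) (map f [0..<n]) \<noteq> None \<and> compliant A (map f [0..<n])"
  define \<rho> where "\<rho> n = (SOME c. creach A T (cinit A T) (map f [0..<n]) c)" for n
  have r: "creach A T (cinit A T) (map f [0..<n]) (\<rho> n)" for n
  proof -
    have "\<exists>c. creach A T (cinit A T) (map f [0..<n]) c" using a reach_iff by blast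
    then show ?thesis unfolding \<rho>_def by (rule someI_ex)
  qed
  have "\<rho> 0 = cinit A T" using r[of 0] by (simp add: creach_Nil)
  moreover have "cstep A T (\<rho> n) (f n) (\<rho> (Suc n))" for n
  proof -
    have "creach A T (cinit A T) (map f [0..<n] @ [f n]) (\<rho> (Suc n))" using r[of "Suc n"] by simp
    then obtain c' where "creach A T (cinit A T) (map f [0..<n]) c'" "cstep A T c' (f n) (\<rho> (Suc n))"
      using creach_snoc by blast
    then show ?thesis using creach_det[OF _ r[of n]] by blast
  qed
  ultimately show "Inf f \<in> clts_lang A T" unfolding clts_lang_def by blast
qed

lemma arch_lang_Fin: "Fin x \<in> arch_lang A \<longleftrightarrow> compliant A x" by (simp add: arch_lang_def)
lemma arch_lang_Inf: "Inf f \<in> arch_lang A \<longleftrightarrow> (\<forall>n. compliant A (map f [0..<n]))" by (simp add: arch_lang_def)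

lemma REFINE:
  assumes "\<And>w. compliant B w \<Longrightarrow> compliant A w \<and> (ch_run B (chi0 B) w = Some (chi0 B) \<longleftrightarrow> ch_run A (chi0 A) w = Some (chi0 A))"
  shows "clts_lang B T = clts_lang A T \<inter> arch_lang B"
proof (rule set_eqI)
  fix w
  show "w \<in> clts_lang B T \<longleftrightarrow> w \<in> clts_lang A T \<inter> arch_lang B"
  proof (cases w)
    case (Fin x)
    have "ch_run B (chi0 B) x = Some (chi0 B) \<Longrightarrow> compliant B x" by (simp add: compliant_def)
    then show ?thesis using Fin assms[of x] by (auto simp: lang_fin arch_lang_Fin)
  next
    case (Inf f)
    then show ?thesis using assms by (auto simp: lang_inf arch_lang_Inf)
  qed
qed

lemma PREACH:
  assumes "w \<in> clts_lang A T" "fprefix u w"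
  shows "\<exists>c. creach A T (cinit A T) u c"
proof (cases w)
  case (Fin x)
  then obtain v where x: "x = u @ v" using assms(2) by auto
  have "lrun T (linit T) x \<noteq> None" "compliant A x" using assms(1) Fin by (auto simp: lang_fin compliant_def)
  then have "lrun T (linit T) u \<noteq> None" "compliant A u" using x
    by (auto simp: lrun_append intro: compliant_prefix split: option.splits)
  then show ?thesis using reach_iff by blast
next
  case (Inf f)
  define n where "n = length u"
  have u: "u = map f [0..<n]" using Inf assms(2) unfolding n_def by simp
  have "lrun T (linit T) (map f [0..<n]) \<noteq> None \<and> compliant A (map f [0..<n])"
    using assms(1) Inf lang_inf by blast
  then show ?thesis using u reach_iff by blast
qed

lemma NEXT: "fprefix u w \<Longrightarrow> w \<noteq> Fin u \<Longrightarrow> \<exists>b. fprefix (u @ [b]) w"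
proof (cases w)
  case (Fin x)
  assume a: "fprefix u w" "w \<noteq> Fin u"
  then obtain v where "x = u @ v" "v \<noteq> []" using Fin by auto
  then show ?thesis using Fin by (intro exI[of _ "hd v"]) (auto simp: neq_Nil_conv)
next
  case (Inf f)
  assume a: "fprefix u w"
  define n where "n = length u"
  have u: "u = map f [0..<n]" using Inf a unfolding n_def by simp
  show ?thesis using Inf u by (intro exI[of _ "f n"]) simp
qed

lemma MAX:
  assumes df: "clts_deadlock_free A T" and r: "creach A T (cinit A T) u c"
  shows "\<exists>w \<in> clts_lang A T. fprefix u w"
proof -
  define nxt where "nxt c = (SOME ac. cstep A T c (fst ac) (snd ac))" for c
  define cs where "cs = rec_nat c (\<lambda>_ x. snd (nxt x))"
  define as where "as n = fst (nxt (cs n))" for n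
  have cs0: "cs 0 = c" and csS: "cs (Suc n) = snd (nxt (cs n))" for n by (simp_all add: cs_def)
  have reach: "(\<forall>k<n. \<not> cfinal A T (cs k)) \<longrightarrow> creach A T (cinit A T) (u @ map as [0..<n]) (cs n)" for n
  proof (induction n)
    case 0 then show ?case using r cs0 by simp
  next
    case (Suc n)
    show ?case
    proof
      assume nf: "\<forall>k<Suc n. \<not> cfinal A T (cs k)"
      then have rn: "creach A T (cinit A T) (u @ map as [0..<n]) (cs n)" using Suc by auto
      then obtain a c' where "cstep A T (cs n) a c'" using df nf unfolding clts_deadlock_free_def by blast
      then have "cstep A T (cs n) (fst (nxt (cs n))) (snd (nxt (cs n)))"
        unfolding nxt_def by (rule someI[where P = "\<lambda>ac. cstep A T (cs n) (fst ac) (snd ac)" and x = "(a, c')", simplified])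
      then have cst: "cstep A T (cs n) (as n) (cs (Suc n))" by (simp add: as_def csS)
      have "creach A T (cinit A T) ((u @ map as [0..<n]) @ [as n]) (cs (Suc n))"
        using creach_snoc rn cst by blast
      then show "creach A T (cinit A T) (u @ map as [0..<Suc n]) (cs (Suc n))" by simp
    qed
  qed
  show ?thesis
  proof (cases "\<exists>n. cfinal A T (cs n)")
    case True
    define n0 where "n0 = (LEAST n. cfinal A T (cs n))"
    have f: "cfinal A T (cs n0)" using True unfolding n0_def by (rule LeastI_ex)
    have "\<forall>k<n0. \<not> cfinal A T (cs k)" unfolding n0_def using not_less_Least by blast
    then have "creach A T (cinit A T) (u @ map as [0..<n0]) (cs n0)" using reach by blast
    then have "Fin (u @ map as [0..<n0]) \<in> clts_lang A T" using f unfolding clts_lang_def by blast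
    then show ?thesis by (intro bexI[of _ "Fin (u @ map as [0..<n0])"]) simp_all
  next
    case False
    then have all: "creach A T (cinit A T) (u @ map as [0..<n]) (cs n)" for n using reach by blast
    have "\<forall>n. lrun T (linit T) (map (pre u as) [0..<n]) \<noteq> None \<and> compliant A (map (pre u as) [0..<n])"
    proof
      fix n
      show "lrun T (linit T) (map (pre u as) [0..<n]) \<noteq> None \<and> compliant A (map (pre u as) [0..<n])"
      proof (cases "n \<le> length u")
        case True
        have lr: "lrun T (linit T) u \<noteq> None" "compliant A u" using r reach_iff by blast+
        have "lrun T (linit T) (take n u) \<noteq> None"
          using lr(1) lrun_append[of T "linit T" "take n u" "drop n u"] by (auto split: option.splits)
        moreover have "compliant A (take n u)" using lr(2) compliant_prefix[of A "take n u" "drop n u"] by simp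
        ultimately have "lrun T (linit T) (take n u) \<noteq> None" "compliant A (take n u)" by blast+
        then show ?thesis using True map_pre[of u as n] by simp
      next
        case False
        have "lrun T (linit T) (u @ map as [0..<n - length u]) \<noteq> None \<and> compliant A (u @ map as [0..<n - length u])"
          using all[of "n - length u"] reach_iff by blast
        then show ?thesis using False map_pre[of u as n] by simp
      qed
    qed
    then have "Inf (pre u as) \<in> clts_lang A T" by (simp add: lang_inf)
    moreover have "fprefix u (Inf (pre u as))" using map_pre[of u as "length u"] by simp
    ultimately show ?thesis by blast
  qed
qed

lemma LSUB: "(\<And>u. compliant B u \<Longrightarrow> compliant A u) \<Longrightarrow> arch_lang B \<subseteq> arch_lang A"
  by (auto simp: arch_lang_def)

lemma pref_mono: "X \<subseteq> Y \<Longrightarrow> pref X \<subseteq> pref Y"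
  by (auto simp: pref_def)

lemma part1:
  fixes S :: "('s, 'p, 'v) gproto"
  assumes fin: "finite (UNIV :: 'p set)" and imp: "implementable bag S"
  shows "implementable p2p S"
proof -
  obtain T :: "(('p, 'v) act list, 'p, 'v) clts" where
    T: "clts_wf T" "clts_deadlock_free bag T" "clts_lang bag T = sem bag S"
    using imp unfolding implementable_def by blast
  have KB: "compliant p2p u" if w: "w \<in> EE S \<inter> arch_lang bag" and u: "fprefix u w" for w u
  proof -
    obtain g where g: "g \<in> glang S" "interswap_eq w (split_word g)" using w by (auto simp: eq_closure_def)
    have cb: "compliant bag u" using PC w u by blast
    obtain N where N: "\<forall>r::'p. prefix (pj r u) (pj r (spl (gtake N g)))" using F2[OF fin u g(2)] by blast
    show ?thesis using C1[OF cb N] .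
  qed
  have EQ: "EE S \<inter> arch_lang bag = EE S \<inter> arch_lang p2p"
  proof
    show "EE S \<inter> arch_lang bag \<subseteq> EE S \<inter> arch_lang p2p"
    proof
      fix w assume w: "w \<in> EE S \<inter> arch_lang bag"
      then have "w \<in> arch_lang p2p" using KB[OF w] by (intro ALL) blast
      then show "w \<in> EE S \<inter> arch_lang p2p" using w by blast
    qed
    show "EE S \<inter> arch_lang p2p \<subseteq> EE S \<inter> arch_lang bag" using LSUB[of p2p bag] pp_bag by blast
  qed
  have EQf: "eq_closure {w \<in> split_word ` glang S. is_fin w} \<inter> arch_lang bag =
      eq_closure {w \<in> split_word ` glang S. is_fin w} \<inter> arch_lang p2p"
    using EQ Efin_sub[of S] by blast
  have semEQ: "sem bag S = sem p2p S" unfolding sem_def EQ EQf ..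
  have langEQ: "clts_lang p2p T = sem p2p S"
  proof -
    have "clts_lang p2p T = clts_lang bag T \<inter> arch_lang p2p"
      by (rule REFINE) (use pp_bag pp_bag_emp in blast)
    also have "\<dots> = sem p2p S" using T(3) semEQ S1[of p2p S] by blast
    finally show ?thesis .
  qed
  have DL: "clts_deadlock_free p2p T"
    unfolding clts_deadlock_free_def
  proof (intro allI impI)
    fix u c assume a: "creach p2p T (cinit p2p T) u c \<and> \<not> cfinal p2p T c"
    then have lr: "lrun T (linit T) u = Some (fst c)" and cr: "ch_run p2p (chi0 p2p) u = Some (snd c)"
      by (auto simp: creach_iff)
    have cp: "compliant p2p u" using cr by (simp add: compliant_def)
    then obtain \<chi>b where \<chi>b: "ch_run bag (chi0 bag) u = Some \<chi>b" using pp_bag by (auto simp: compliant_def)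
    define cb where "cb = (fst c, \<chi>b)"
    have rb: "creach bag T (cinit bag T) u cb" using lr \<chi>b by (simp add: creach_iff cb_def)
    have "\<not> cfinal bag T cb"
    proof
      assume "cfinal bag T cb"
      then have "\<forall>p. fst c p \<in> dfinal (T p)" "\<chi>b = chi0 bag" by (auto simp: cfinal_def cb_def)
      then have "snd c = chi0 p2p" using pp_bag_emp[OF cp] \<chi>b cr by simp
      then show False using a \<open>\<forall>p. fst c p \<in> dfinal (T p)\<close> by (simp add: cfinal_def)
    qed
    then obtain b cb' where st: "cstep bag T cb b cb'" using T(2) rb unfolding clts_deadlock_free_def by blast
    have "creach bag T (cinit bag T) (u @ [b]) cb'" using creach_snoc rb st by blast
    then obtain w where w: "w \<in> clts_lang bag T" "fprefix (u @ [b]) w" using MAX[OF T(2)] by blast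
    have "w \<in> clts_lang p2p T" using w(1) T(3) semEQ langEQ by simp
    then obtain c2 where "creach p2p T (cinit p2p T) (u @ [b]) c2" using PREACH w(2) by blast
    then obtain c' where "creach p2p T (cinit p2p T) u c'" "cstep p2p T c' b c2" using creach_snoc by blast
    then have "cstep p2p T c b c2" using creach_det a by blast
    then show "\<exists>a c'. cstep p2p T c a c'" by blast
  qed
  show ?thesis unfolding implementable_def using T(1) DL langEQ by blast
qed

lemma part2:
  fixes S :: "('s, 'p, 'v) gproto"
  assumes fin: "finite (UNIV :: 'p set)" and imp: "implementable p2p S"
  shows "implementable sb S"
proof -
  obtain T :: "(('p, 'v) act list, 'p, 'v) clts" where
    T: "clts_wf T" "clts_deadlock_free p2p T" "clts_lang p2p T = sem p2p S"
    using imp unfolding implementable_def by blast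
  have EXT': "\<exists>w'. w' \<in> EE S \<inter> arch_lang sb \<and> fprefix u w'"
    if w: "w \<in> EE S" and u: "fprefix u w" and c: "compliant sb u" for w u
  proof -
    obtain g where g: "g \<in> glang S" "interswap_eq w (split_word g)" using w by (auto simp: eq_closure_def)
    obtain w' where w': "interswap_eq w' (split_word g)" "w' \<in> arch_lang sb" "fprefix u w'"
      using EXT[OF fin c u g(2)] by blast
    have "w' \<in> EE S" using w'(1) g(1) by (auto simp: eq_closure_def)
    then show ?thesis using w' by blast
  qed
  have sbsub: "arch_lang sb \<subseteq> arch_lang p2p" using LSUB sb_pp by blast
  have semEQ: "sem sb S = sem p2p S \<inter> arch_lang sb"
  proof
    show "sem sb S \<subseteq> sem p2p S \<inter> arch_lang sb"
    proof
      fix x assume x: "x \<in> sem sb S"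
      have "pref (EE S \<inter> arch_lang sb) \<subseteq> pref (EE S \<inter> arch_lang p2p)" using sbsub by (intro pref_mono) blast
      then have "x \<in> sem p2p S" using x sbsub unfolding sem_def by blast
      then show "x \<in> sem p2p S \<inter> arch_lang sb" using x S1 by blast
    qed
    show "sem p2p S \<inter> arch_lang sb \<subseteq> sem sb S"
    proof
      fix x assume x: "x \<in> sem p2p S \<inter> arch_lang sb"
      show "x \<in> sem sb S"
      proof (cases "x \<in> eq_closure {w \<in> split_word ` glang S. is_fin w}")
        case True then show ?thesis using x by (simp add: sem_def)
      next
        case False
        then have inf: "is_inf x" and pp: "\<forall>u. fprefix u x \<longrightarrow> u \<in> pref (EE S \<inter> arch_lang p2p)"
          using x by (auto simp: sem_def)
        have "\<forall>u. fprefix u x \<longrightarrow> u \<in> pref (EE S \<inter> arch_lang sb)"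
        proof (intro allI impI)
          fix u assume u: "fprefix u x"
          then obtain w0 where w0: "w0 \<in> EE S" "fprefix u w0" using pp by (auto simp: pref_def)
          have "compliant sb u" using PC x u by blast
          then show "u \<in> pref (EE S \<inter> arch_lang sb)" using EXT'[OF w0] by (auto simp: pref_def)
        qed
        then show ?thesis using inf by (simp add: sem_def)
      qed
    qed
  qed
  have langEQ: "clts_lang sb T = sem sb S"
  proof -
    have "clts_lang sb T = clts_lang p2p T \<inter> arch_lang sb"
      by (rule REFINE) (use sb_pp sb_pp_emp in blast)
    then show ?thesis using T(3) semEQ by simp
  qed
  have DL: "clts_deadlock_free sb T"
    unfolding clts_deadlock_free_def
  proof (intro allI impI)
    fix u c assume a: "creach sb T (cinit sb T) u c \<and> \<not> cfinal sb T c"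
    then have lr: "lrun T (linit T) u = Some (fst c)" and cr: "ch_run sb (chi0 sb) u = Some (snd c)"
      by (auto simp: creach_iff)
    have cs: "compliant sb u" using cr by (simp add: compliant_def)
    then obtain \<chi>p where \<chi>p: "ch_run p2p (chi0 p2p) u = Some \<chi>p" using sb_pp by (auto simp: compliant_def)
    have rp: "creach p2p T (cinit p2p T) u (fst c, \<chi>p)" using lr \<chi>p by (simp add: creach_iff)
    obtain w where w: "w \<in> clts_lang p2p T" "fprefix u w" using MAX[OF T(2) rp] by blast
    obtain w0 where w0: "w0 \<in> EE S \<inter> arch_lang p2p" "fprefix u w0" using S2 w T(3) by metis
    obtain w' where w': "w' \<in> EE S \<inter> arch_lang sb" "fprefix u w'" using EXT'[OF _ w0(2) cs] w0(1) by blast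
    have w'L: "w' \<in> clts_lang sb T" using S3[OF fin w'(1)] langEQ by simp
    show "\<exists>a c'. cstep sb T c a c'"
    proof (cases "w' = Fin u")
      case True
      then obtain c' where "creach sb T (cinit sb T) u c'" "cfinal sb T c'"
        using w'L unfolding clts_lang_def by blast
      then show ?thesis using a creach_det by blast
    next
      case False
      then obtain b where "fprefix (u @ [b]) w'" using NEXT w'(2) by blast
      then obtain c2 where "creach sb T (cinit sb T) (u @ [b]) c2" using PREACH w'L by blast
      then obtain c' where "creach sb T (cinit sb T) u c'" "cstep sb T c' b c2" using creach_snoc by blast
      then have "cstep sb T c b c2" using creach_det a by blast
      then show ?thesis by blast
    qed
  qed
  show ?thesis unfolding implementable_def using T(1) DL langEQ by blast
qed

theorem lemma7p9:
  fixes S :: "('s, 'p, 'v) gproto"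
  assumes "finite (UNIV :: 'p set)"
  shows "(global_protocol S \<and> implementable bag S \<longrightarrow> implementable p2p S) \<and>
         (global_protocol S \<and> implementable p2p S \<longrightarrow> implementable sb S)"
  using part1[OF assms] part2[OF assms] by blast


end
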